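(* Let $L>0$, $d_S>0$, $\Lambda>0$ a constant, and $\beta,\gamma,\eta$ positive H\"older continuous functions on $[0,L]$; set $h=(\gamma+\eta)/\beta$, $h_{min}=\min_{[0,L]}h$, $\Theta_h=\{x\in[0,L]: h(x)=h_{min}\}$, and assume $\Lambda>h(x)$ for all $x\in[0,L]$. Let $d_{I,n}\to0$ and let $(S_n,I_n)$ be endemic equilibria (positive $C^2([0,L])$ solutions of $-d_S S_{xx}=\Lambda-S-\beta SI+\gamma I$, $-d_{I,n}I_{xx}=\beta SI-(\gamma+\eta)I$ in $(0,L)$, $S_x=I_x=0$ at $x=0,L$) such that $S_n\to\hat S$ uniformly on $[0,L]$ and $\int_0^L I_n\zeta\,{\rm d}x\to\int_{[0,L]}\zeta\,{\rm d}\mu$ for all $\zeta\in C([0,L])$, for some finite nonnegative Borel measure $\mu$ on $[0,L]$. Assume $h\in C^2([0,L])$, $\Theta_h=[\varrho_1,\varrho_2]$ with $0<\varrho_1<\varrho_2<L$, and $h_x$ is non-decreasing on $[0,\varrho_1]\cup[\varrho_2,L]$. Then there exist $\tau_1,\tau_2$ with $0<\tau_1<\varrho_1<\varrho_2<\tau_2<L$ such that $\hat S(x)=h(x)$ for all $x\in[\tau_1,\tau_2]$; $\hat S$ satisfies $-d_S\hat S_{xx}=\Lambda-\hat S$ in $(0,\tau_1)\cup(\tau_2,L)$, $\hat S_x(0)=\hat S_x(L)=0$, $\hat S(\tau_1)=h(\tau_1)$, $\hat S(\tau_2)=h(\tau_2)$; on $(\tau_1,\tau_2)$ the measure $\mu$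 has density $\frac{\Lambda-h+d_Sh_{xx}}{\eta}$ with respect to Lebesgue measure; and $\mu([0,\tau_1)\cup(\tau_2,L])=0$.
   Context: "$\mu$ has density $f$ on an open interval $J$" means $\mu(A)=\int_A f\,{\rm d}x$ for every Borel set $A\subset J$. *)

theory Defs
  imports "HOL-Analysis.Analysis"
begin

definition holder_on :: "real set \<Rightarrow> (real \<Rightarrow> real) \<Rightarrow> bool" where
  "holder_on A f \<longleftrightarrow> (\<exists>\<alpha> C. 0 < \<alpha> \<and> \<alpha> \<le> 1 \<and>
      (\<forall>x\<in>A. \<forall>y\<in>A. \<bar>f x - f y\<bar> \<le> C * \<bar>x - y\<bar> powr \<alpha>))"

definition C2_with :: "real set \<Rightarrow> (real \<Rightarrow> real) \<Rightarrow> (real \<Rightarrow> real) \<Rightarrow> (real \<Rightarrow> real) \<Rightarrow> bool" where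
  "C2_with A f f1 f2 \<longleftrightarrow>
     (\<forall>x\<in>A. (f has_real_derivative f1 x) (at x within A) \<and>
             (f1 has_real_derivative f2 x) (at x within A)) \<and> continuous_on A f2"

definition endemic_eq ::
  "real \<Rightarrow> real \<Rightarrow> real \<Rightarrow> (real \<Rightarrow> real) \<Rightarrow> (real \<Rightarrow> real) \<Rightarrow> (real \<Rightarrow> real) \<Rightarrow> real
     \<Rightarrow> (real \<Rightarrow> real) \<Rightarrow> (real \<Rightarrow> real) \<Rightarrow> bool" where
  "endemic_eq L dS \<Lambda> \<beta> \<gamma> \<eta> dI S I \<longleftrightarrow>
    (\<exists>S1 S2 I1 I2. C2_with {0..L} S S1 S2 \<and> C2_with {0..L} I I1 I2 \<and>
      (\<forall>x\<in>{0..L}. S x > 0 \<and> I x > 0) \<and>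
      (\<forall>x\<in>{0<..<L}.
          - dS * S2 x = \<Lambda> - S x - \<beta> x * S x * I x + \<gamma> x * I x \<and>
          - dI * I2 x = \<beta> x * S x * I x - (\<gamma> x + \<eta> x) * I x) \<and>
      S1 0 = 0 \<and> S1 L = 0 \<and> I1 0 = 0 \<and> I1 L = 0)"

end

theory Submission
  imports Defs "HOL-Analysis.Analysis"
begin

lemma C2_cont:
  assumes "C2_with A f f1 f2"
  shows "continuous_on A f" "continuous_on A f1" "continuous_on A f2"
proof -
  show "continuous_on A f"
    using assms unfolding C2_with_def
    by (meson DERIV_continuous continuous_on_eq_continuous_within)
  show "continuous_on A f1"
    using assms unfolding C2_with_def
    by (meson DERIV_continuous continuous_on_eq_continuous_within)
  show "continuous_on A f2" using assms unfolding C2_with_def by blast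
qed

lemma cont_ext_eq:
  fixes f g :: "real \<Rightarrow> real"
  assumes "L > 0" "continuous_on {0..L} f" "continuous_on {0..L} g"
    "\<forall>x\<in>{0<..<L}. f x = g x" "x \<in> {0..L}"
  shows "f x = g x"
proof -
  have cl: "closure {0<..<L} = {0..L}" using assms(1) by simp
  have "continuous_on (closure {0<..<L}) (\<lambda>x. f x - g x)"
    using assms cl by (auto intro!: continuous_intros)
  then have "norm (f x - g x) \<le> 0"
    by (rule continuous_on_closure_norm_le) (use assms cl in auto)
  then show ?thesis by simp
qed

definition Phi :: "real \<Rightarrow> (real \<Rightarrow> real) \<Rightarrow> real \<Rightarrow> real" where
  "Phi L f x = integral {0..L} (\<lambda>s. max (x - s) 0 * f s)"
definition Psi :: "real \<Rightarrow> (real \<Rightarrow> real) \<Rightarrow> real \<Rightarrow> real" where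
  "Psi L f x = integral {0..L} (\<lambda>s. max (s - x) 0 * f s)"

lemma Phi_eq:
  fixes f :: "real \<Rightarrow> real"
  assumes f: "continuous_on {0..L} f" and x: "0 \<le> x" "x \<le> L"
  shows "Phi L f x = x * integral {0..x} f - integral {0..x} (\<lambda>s. s * f s)"
proof -
  let ?g = "\<lambda>s. max (x - s) 0 * f s"
  have gi: "?g integrable_on {0..L}"
    by (rule integrable_continuous_interval) (auto intro!: continuous_intros f)
  have "integral {0..x} ?g + integral {x..L} ?g = integral {0..L} ?g"
    by (rule Henstock_Kurzweil_Integration.integral_combine) (use x gi in auto)
  moreover have "integral {x..L} ?g = 0"
    by (subst integral_cong[where g="\<lambda>_. 0"]) auto
  moreover have "integral {0..x} ?g = integral {0..x} (\<lambda>s. x * f s - s * f s)"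
    by (rule integral_cong) (auto simp: algebra_simps)
  moreover have fx: "continuous_on {0..x} f" using f x by (auto intro: continuous_on_subset)
  moreover have "integral {0..x} (\<lambda>s. x * f s - s * f s) = x * integral {0..x} f - integral {0..x} (\<lambda>s. s * f s)"
    by (subst integral_diff) (auto intro!: integrable_continuous_interval continuous_intros fx)
  ultimately show ?thesis unfolding Phi_def by simp
qed

lemma Phi_deriv:
  fixes f :: "real \<Rightarrow> real"
  assumes f: "continuous_on {0..L} f" and x: "x \<in> {0..L}"
  shows "(Phi L f has_real_derivative integral {0..x} f) (at x within {0..L})"
proof -
  have G: "((\<lambda>y. integral {0..y} f) has_real_derivative f x) (at x within {0..L})"
    by (rule integral_has_real_derivative[OF f x])
  have H: "((\<lambda>y. integral {0..y} (\<lambda>s. s * f s)) has_real_derivative x * f x) (at x within {0..L})"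
    by (rule integral_has_real_derivative[OF _ x]) (auto intro!: continuous_intros f)
  have "((\<lambda>y. y * integral {0..y} f - integral {0..y} (\<lambda>s. s * f s)) has_real_derivative
        (x * f x + 1 * integral {0..x} f - x * f x)) (at x within {0..L})"
    by (intro DERIV_diff DERIV_mult' DERIV_ident G H)
  then have "((\<lambda>y. y * integral {0..y} f - integral {0..y} (\<lambda>s. s * f s)) has_real_derivative
        integral {0..x} f) (at x within {0..L})" by simp
  then show ?thesis
    by (rule has_field_derivative_transform_within[where d=1]) (use x Phi_eq[OF f] in auto)
qed

lemma Psi_eq:
  fixes f :: "real \<Rightarrow> real"
  assumes f: "continuous_on {0..L} f"
  shows "Psi L f x = Phi L f x + integral {0..L} (\<lambda>s. s * f s) - x * integral {0..L} f"
proof -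
  have "Psi L f x = integral {0..L} (\<lambda>s. max (x - s) 0 * f s + (s * f s - x * f s))"
    unfolding Psi_def by (rule integral_cong) (auto simp: max_def algebra_simps)
  also have "\<dots> = Phi L f x + integral {0..L} (\<lambda>s. s * f s) - x * integral {0..L} f"
    unfolding Phi_def
    by (subst integral_add integral_diff integral_mult_left,
        auto intro!: integrable_continuous_interval continuous_intros f)+
  finally show ?thesis .
qed

lemma Psi_deriv:
  fixes f :: "real \<Rightarrow> real"
  assumes f: "continuous_on {0..L} f" and x: "x \<in> {0..L}"
  shows "(Psi L f has_real_derivative integral {0..x} f - integral {0..L} f) (at x within {0..L})"
proof -
  have "((\<lambda>y. Phi L f y + integral {0..L} (\<lambda>s. s * f s) - y * integral {0..L} f) has_real_derivative
     integral {0..x} f + 0 - (x * 0 + 1 * integral {0..L} f)) (at x within {0..L})"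
    by (intro DERIV_diff DERIV_add DERIV_mult' DERIV_ident DERIV_const Phi_deriv[OF f x])
  moreover have e: "Psi L f = (\<lambda>y. Phi L f y + integral {0..L} (\<lambda>s. s * f s) - y * integral {0..L} f)"
    by (rule ext) (rule Psi_eq[OF f])
  ultimately show ?thesis unfolding e by simp
qed

lemma rep:
  fixes F F1 F2 :: "real \<Rightarrow> real"
  assumes C: "C2_with {0..L} F F1 F2" and L: "0 < L" and b0: "F1 0 = 0" and bL: "F1 L = 0"
  shows "\<forall>x\<in>{0..L}. F x = F 0 + Phi L F2 x \<and> F x = F L + Psi L F2 x"
proof -
  have c2: "continuous_on {0..L} F2" using C2_cont[OF C] by simp
  have dF: "\<And>x. x \<in> {0..L} \<Longrightarrow> (F has_real_derivative F1 x) (at x within {0..L})"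
    and dF1: "\<And>x. x \<in> {0..L} \<Longrightarrow> (F1 has_real_derivative F2 x) (at x within {0..L})"
    using C unfolding C2_with_def by auto
  define G where "G = (\<lambda>x. integral {0..x} F2)"
  have dG: "\<And>x. x \<in> {0..L} \<Longrightarrow> (G has_real_derivative F2 x) (at x within {0..L})"
    unfolding G_def by (rule integral_has_real_derivative[OF c2])
  have "\<And>x. x \<in> {0..L} \<Longrightarrow> ((\<lambda>x. F1 x - G x) has_real_derivative 0) (at x within {0..L})"
  proof -
    fix x assume x: "x \<in> {0..L}"
    show "((\<lambda>x. F1 x - G x) has_real_derivative 0) (at x within {0..L})"
      using DERIV_diff[OF dF1[OF x] dG[OF x]] by simp
  qed
  then obtain c where c: "\<forall>x\<in>{0..L}. F1 x - G x = c"
    using has_field_derivative_zero_constant[of "{0..L}" "\<lambda>x. F1 x - G x"] by auto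
  have G0: "G 0 = 0" unfolding G_def by simp
  have "c = 0" using c[rule_format, of 0] L b0 G0 by simp
  then have F1G: "\<And>x. x \<in> {0..L} \<Longrightarrow> F1 x = G x" using c by auto
  have GL: "G L = 0" using F1G[of L] bL L by simp
  have "\<And>x. x \<in> {0..L} \<Longrightarrow> ((\<lambda>x. F x - Phi L F2 x) has_real_derivative 0) (at x within {0..L})"
  proof -
    fix x assume x: "x \<in> {0..L}"
    show "((\<lambda>x. F x - Phi L F2 x) has_real_derivative 0) (at x within {0..L})"
      using DERIV_diff[OF dF[OF x] Phi_deriv[OF c2 x]] F1G[OF x] unfolding G_def by simp
  qed
  then obtain c1 where c1: "\<forall>x\<in>{0..L}. F x - Phi L F2 x = c1"
    using has_field_derivative_zero_constant[of "{0..L}" "\<lambda>x. F x - Phi L F2 x"] by auto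
  have P0: "Phi L F2 0 = 0" using Phi_eq[OF c2, of 0] L by simp
  have "\<And>x. x \<in> {0..L} \<Longrightarrow> ((\<lambda>x. F x - Psi L F2 x) has_real_derivative 0) (at x within {0..L})"
  proof -
    fix x assume x: "x \<in> {0..L}"
    show "((\<lambda>x. F x - Psi L F2 x) has_real_derivative 0) (at x within {0..L})"
      using DERIV_diff[OF dF[OF x] Psi_deriv[OF c2 x]] F1G[OF x] GL unfolding G_def by simp
  qed
  then obtain c2' where c2': "\<forall>x\<in>{0..L}. F x - Psi L F2 x = c2'"
    using has_field_derivative_zero_constant[of "{0..L}" "\<lambda>x. F x - Psi L F2 x"] by auto
  have PL: "Psi L F2 L = 0" using Psi_eq[OF c2, of L] Phi_eq[OF c2, of L] L GL unfolding G_def by simp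
  show ?thesis
  proof
    fix x assume x: "x \<in> {0..L}"
    have "0 \<in> {0..L}" "L \<in> {0..L}" using L by auto
    then have "F 0 - Phi L F2 0 = c1" "F L - Psi L F2 L = c2'" using c1 c2' by auto
    moreover have "F x - Phi L F2 x = c1" "F x - Psi L F2 x = c2'" using c1 c2' x by auto
    ultimately show "F x = F 0 + Phi L F2 x \<and> F x = F L + Psi L F2 x" using P0 PL by linarith
  qed
qed

lemma ibp:
  fixes u u1 u2 p p1 p2 :: "real \<Rightarrow> real"
  assumes ab: "a \<le> b"
    and du: "\<And>x. x \<in> {a..b} \<Longrightarrow> (u has_real_derivative u1 x) (at x within {a..b})"
    and du1: "\<And>x. x \<in> {a..b} \<Longrightarrow> (u1 has_real_derivative u2 x) (at x within {a..b})"
    and dp: "\<And>x. x \<in> {a..b} \<Longrightarrow> (p has_real_derivative p1 x) (at x within {a..b})"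
    and dp1: "\<And>x. x \<in> {a..b} \<Longrightarrow> (p1 has_real_derivative p2 x) (at x within {a..b})"
  shows "((\<lambda>x. u2 x * p x - u x * p2 x) has_integral
          ((u1 b * p b - u b * p1 b) - (u1 a * p a - u a * p1 a))) {a..b}"
proof -
  have "((\<lambda>x. u1 x * p x - u x * p1 x) has_vector_derivative (u2 x * p x - u x * p2 x)) (at x within {a..b})"
    if x: "x \<in> {a..b}" for x
  proof -
    have "((\<lambda>x. u1 x * p x - u x * p1 x) has_real_derivative
       (u1 x * p1 x + u2 x * p x - (u x * p2 x + u1 x * p1 x))) (at x within {a..b})"
      by (intro DERIV_diff DERIV_mult' du du1 dp dp1 x)
    then show ?thesis by (simp add: has_real_derivative_iff_has_vector_derivative[symmetric] algebra_simps)
  qed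
  from fundamental_theorem_of_calculus[OF ab this] show ?thesis by simp
qed

lemma holder_cont:
  fixes f :: "real \<Rightarrow> real"
  assumes "holder_on A f"
  shows "continuous_on A f"
proof -
  obtain a C where a: "0 < a" "a \<le> 1" and H: "\<forall>x\<in>A. \<forall>y\<in>A. \<bar>f x - f y\<bar> \<le> C * \<bar>x - y\<bar> powr a"
    using assms unfolding holder_on_def by blast
  define C' where "C' = max C 1"
  have C': "C' > 0" unfolding C'_def by simp
  have H': "\<forall>x\<in>A. \<forall>y\<in>A. \<bar>f x - f y\<bar> \<le> C' * \<bar>x - y\<bar> powr a"
  proof (intro ballI)
    fix x y assume "x \<in> A" "y \<in> A"
    then have "\<bar>f x - f y\<bar> \<le> C * \<bar>x - y\<bar> powr a" using H by auto
    also have "\<dots> \<le> C' * \<bar>x - y\<bar> powr a" unfolding C'_def by (intro mult_right_mono) auto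
    finally show "\<bar>f x - f y\<bar> \<le> C' * \<bar>x - y\<bar> powr a" .
  qed
  show ?thesis unfolding continuous_on_iff
  proof (intro ballI allI impI)
    fix x e :: real assume x: "x \<in> A" and e: "0 < e"
    define d where "d = (e / C') powr (1 / a)"
    have d: "d > 0" unfolding d_def using e C' by simp
    have "\<forall>y\<in>A. dist y x < d \<longrightarrow> dist (f y) (f x) < e"
    proof (intro ballI impI)
      fix y assume y: "y \<in> A" and dy: "dist y x < d"
      have "\<bar>y - x\<bar> powr a < d powr a"
        using dy a by (intro powr_less_mono2) (auto simp: dist_real_def)
      also have "d powr a = e / C'" unfolding d_def using a e C' by (simp add: powr_powr)
      finally have "C' * \<bar>y - x\<bar> powr a < e" using C' by (simp add: field_simps)
      then show "dist (f y) (f x) < e" using H' x y by (force simp: dist_real_def)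
    qed
    then show "\<exists>d>0. \<forall>y\<in>A. dist y x < d \<longrightarrow> dist (f y) (f x) < e" using d by blast
  qed
qed

definition eqsys where
  "eqsys L dS \<Lambda> \<beta> \<gamma> \<eta> dI S I S1 S2 I1 I2 \<longleftrightarrow>
     C2_with {0..L} S S1 S2 \<and> C2_with {0..L} I I1 I2 \<and>
      (\<forall>x\<in>{0..L}. S x > 0 \<and> I x > 0) \<and>
      (\<forall>x\<in>{0<..<L}.
          - dS * S2 x = \<Lambda> - S x - \<beta> x * S x * I x + \<gamma> x * I x \<and>
          - dI * I2 x = \<beta> x * S x * I x - (\<gamma> x + \<eta> x) * I x) \<and>
      S1 0 = 0 \<and> S1 L = 0 \<and> I1 0 = 0 \<and> I1 L = 0"

lemma endemic_eqsys: "endemic_eq L dS \<Lambda> \<beta> \<gamma> \<eta> dI S I \<longleftrightarrow> (\<exists>S1 S2 I1 I2. eqsys L dS \<Lambda> \<beta> \<gamma> \<eta> dI S I S1 S2 I1 I2)"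
  unfolding endemic_eq_def eqsys_def by simp

locale setting =
  fixes L dS \<Lambda> \<rho>1 \<rho>2 :: real
    and \<beta> \<gamma> \<eta> h h1 h2 Shat :: "real \<Rightarrow> real"
    and dI :: "nat \<Rightarrow> real"
    and S I :: "nat \<Rightarrow> real \<Rightarrow> real"
    and \<mu> :: "real measure"
  assumes L_pos: "L > 0" and dS_pos: "dS > 0" and Lambda_pos: "\<Lambda> > 0"
    and coef_holder: "holder_on {0..L} \<beta>" "holder_on {0..L} \<gamma>" "holder_on {0..L} \<eta>"
    and coef_pos: "\<forall>x\<in>{0..L}. \<beta> x > 0 \<and> \<gamma> x > 0 \<and> \<eta> x > 0"
    and h_def: "h = (\<lambda>x. (\<gamma> x + \<eta> x) / \<beta> x)"
    and Lambda_gt_h: "\<forall>x\<in>{0..L}. \<Lambda> > h x"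
    and dI_pos: "\<forall>n. dI n > 0" and dI_lim: "dI \<longlonglongrightarrow> 0"
    and equil: "\<forall>n. endemic_eq L dS \<Lambda> \<beta> \<gamma> \<eta> (dI n) (S n) (I n)"
    and S_unif: "uniform_limit {0..L} S Shat sequentially"
    and mu_sets: "sets \<mu> = sets (restrict_space borel {0..L})"
    and mu_finite: "finite_measure \<mu>"
    and I_weak: "\<forall>\<zeta>. continuous_on {0..L} \<zeta> \<longrightarrow>
        (\<lambda>n. integral {0..L} (\<lambda>x. I n x * \<zeta> x)) \<longlonglongrightarrow> integral\<^sup>L \<mu> \<zeta>"
    and h_C2: "C2_with {0..L} h h1 h2"
    and Theta: "{x\<in>{0..L}. h x = Inf (h ` {0..L})} = {\<rho>1..\<rho>2}"
    and rho: "0 < \<rho>1" "\<rho>1 < \<rho>2" "\<rho>2 < L"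
    and h1_mono: "mono_on ({0..\<rho>1} \<union> {\<rho>2..L}) h1"
begin

lemma cont_coef: "continuous_on {0..L} \<beta>" "continuous_on {0..L} \<gamma>" "continuous_on {0..L} \<eta>"
  using coef_holder holder_cont by auto

lemma cont_h: "continuous_on {0..L} h" "continuous_on {0..L} h1" "continuous_on {0..L} h2"
  using C2_cont[OF h_C2] by auto

lemma cont_Shat: "continuous_on {0..L} Shat"
proof -
  have "\<forall>n. continuous_on {0..L} (S n)"
    using equil unfolding endemic_eq_def using C2_cont by blast
  then show ?thesis
    by (intro uniform_limit_theorem[OF _ S_unif]) auto
qed

lemma pos_lower:
  fixes f :: "real \<Rightarrow> real"
  assumes "continuous_on {0..L} f" "\<forall>x\<in>{0..L}. f x > 0"
  shows "\<exists>c>0. \<forall>x\<in>{0..L}. c \<le> f x"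
proof -
  obtain x0 where "x0 \<in> {0..L}" "\<forall>y\<in>{0..L}. f x0 \<le> f y"
    using continuous_attains_inf[OF compact_Icc _ assms(1)] L_pos by auto
  then show ?thesis using assms(2) by blast
qed

lemma bdd_upper:
  fixes f :: "real \<Rightarrow> real"
  assumes "continuous_on {0..L} f"
  shows "\<exists>c>0. \<forall>x\<in>{0..L}. \<bar>f x\<bar> \<le> c"
proof -
  obtain c where "\<forall>x\<in>{0..L}. norm (f x) \<le> c"
    using compact_imp_bounded[OF compact_continuous_image[OF assms compact_Icc]]
    unfolding bounded_iff by auto
  then show ?thesis by (intro exI[of _ "max c 1"]) auto
qed

lemma eqs: obtains S1 S2 I1 I2 where "\<forall>n. eqsys L dS \<Lambda> \<beta> \<gamma> \<eta> (dI n) (S n) (I n) (S1 n) (S2 n) (I1 n) (I2 n)"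
proof -
  have "\<forall>n. \<exists>S1 S2 I1 I2. eqsys L dS \<Lambda> \<beta> \<gamma> \<eta> (dI n) (S n) (I n) S1 S2 I1 I2"
    using equil endemic_eqsys by blast
  then show ?thesis using that by metis
qed

end

locale setting2 = setting +
  fixes S1 S2 I1 I2 :: "nat \<Rightarrow> real \<Rightarrow> real"
  assumes eqsys_all: "\<forall>n. eqsys L dS \<Lambda> \<beta> \<gamma> \<eta> (dI n) (S n) (I n) (S1 n) (S2 n) (I1 n) (I2 n)"
begin

lemma SC2: "C2_with {0..L} (S n) (S1 n) (S2 n)" and IC2: "C2_with {0..L} (I n) (I1 n) (I2 n)"
  and Spos: "\<And>x. x \<in> {0..L} \<Longrightarrow> S n x > 0" and Ipos: "\<And>x. x \<in> {0..L} \<Longrightarrow> I n x > 0"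
  and S1bc: "S1 n 0 = 0" "S1 n L = 0" and I1bc: "I1 n 0 = 0" "I1 n L = 0"
  using eqsys_all unfolding eqsys_def by auto

lemma eq_open: "\<And>x. x \<in> {0<..<L} \<Longrightarrow> - dS * S2 n x = \<Lambda> - S n x - \<beta> x * S n x * I n x + \<gamma> x * I n x"
  "\<And>x. x \<in> {0<..<L} \<Longrightarrow> - dI n * I2 n x = \<beta> x * S n x * I n x - (\<gamma> x + \<eta> x) * I n x"
  using eqsys_all unfolding eqsys_def by auto

lemma contS: "continuous_on {0..L} (S n)" "continuous_on {0..L} (S1 n)" "continuous_on {0..L} (S2 n)"
  using C2_cont[OF SC2] by auto
lemma contI: "continuous_on {0..L} (I n)" "continuous_on {0..L} (I1 n)" "continuous_on {0..L} (I2 n)"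
  using C2_cont[OF IC2] by auto

lemma Ieq: assumes "x \<in> {0..L}" shows "- dI n * I2 n x = \<beta> x * I n x * (S n x - h x)"
proof (rule cont_ext_eq[OF L_pos _ _ _ assms])
  show "continuous_on {0..L} (\<lambda>x. - dI n * I2 n x)" using contI by (auto intro!: continuous_intros)
  show "continuous_on {0..L} (\<lambda>x. \<beta> x * I n x * (S n x - h x))"
    using contI contS cont_coef cont_h by (auto intro!: continuous_intros)
  show "\<forall>x\<in>{0<..<L}. - dI n * I2 n x = \<beta> x * I n x * (S n x - h x)"
  proof
    fix x assume x: "x \<in> {0<..<L}"
    then have b: "\<beta> x > 0" using coef_pos by auto
    have hb: "\<gamma> x + \<eta> x = \<beta> x * h x" unfolding h_def using b by simp
    have e: "- dI n * I2 n x = \<beta> x * S n x * I n x - (\<gamma> x + \<eta> x) * I n x"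
      using eq_open(2)[OF x] .
    show "- dI n * I2 n x = \<beta> x * I n x * (S n x - h x)"
      unfolding e hb by (simp add: algebra_simps)
  qed
qed

lemma Feq: assumes "x \<in> {0..L}" shows "dS * S2 n x + dI n * I2 n x = S n x - \<Lambda> + \<eta> x * I n x"
proof (rule cont_ext_eq[OF L_pos _ _ _ assms])
  show "continuous_on {0..L} (\<lambda>x. dS * S2 n x + dI n * I2 n x)" using contI contS by (auto intro!: continuous_intros)
  show "continuous_on {0..L} (\<lambda>x. S n x - \<Lambda> + \<eta> x * I n x)"
    using contI contS cont_coef by (auto intro!: continuous_intros)
  show "\<forall>x\<in>{0<..<L}. dS * S2 n x + dI n * I2 n x = S n x - \<Lambda> + \<eta> x * I n x"
  proof
    fix x assume x: "x \<in> {0<..<L}"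
    have a: "dS * S2 n x = S n x + \<beta> x * S n x * I n x - \<Lambda> - \<gamma> x * I n x"
      using eq_open(1)[OF x, of n] by (simp add: algebra_simps)
    have b: "dI n * I2 n x = \<gamma> x * I n x + \<eta> x * I n x - \<beta> x * S n x * I n x"
      using eq_open(2)[OF x, of n] by (simp add: algebra_simps)
    show "dS * S2 n x + dI n * I2 n x = S n x - \<Lambda> + \<eta> x * I n x" using a b by linarith
  qed
qed

lemma Iint: "I n integrable_on {0..L}"
  by (rule integrable_continuous_interval[OF contI(1)])

lemma Ibound: obtains B where "B > 0" "\<And>n. integral {0..L} (I n) \<le> B"
proof -
  have "(\<lambda>n. integral {0..L} (I n)) \<longlonglongrightarrow> integral\<^sup>L \<mu> (\<lambda>_. 1)"
    using I_weak[rule_format, of "\<lambda>_. 1"] by simp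
  then have "Bseq (\<lambda>n. integral {0..L} (I n))" using convergent_imp_Bseq convergentI by blast
  then obtain B where "B > 0" "\<And>n. norm (integral {0..L} (I n)) \<le> B" unfolding Bseq_def by auto
  then show ?thesis using that[of B] by (metis abs_le_D1 real_norm_def)
qed

lemma Iint_nonneg: "integral {0..L} (I n) \<ge> 0"
  using Ipos by (intro integral_nonneg Iint) (auto simp: less_imp_le)

lemma dI1_bound: obtains K where "K > 0" "\<forall>\<^sub>F n in sequentially. \<forall>t\<in>{0..L}. \<bar>dI n * I1 n t\<bar> \<le> K"
proof -
  obtain B where B: "B > 0" "\<And>n. integral {0..L} (I n) \<le> B" using Ibound by blast
  obtain Bb where Bb: "Bb > 0" "\<forall>x\<in>{0..L}. \<bar>\<beta> x\<bar> \<le> Bb" using bdd_upper[OF cont_coef(1)] by blast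
  obtain Bs where Bs: "Bs > 0" "\<forall>x\<in>{0..L}. \<bar>Shat x\<bar> \<le> Bs" using bdd_upper[OF cont_Shat] by blast
  obtain Bh where Bh: "Bh > 0" "\<forall>x\<in>{0..L}. \<bar>h x\<bar> \<le> Bh" using bdd_upper[OF cont_h(1)] by blast
  define C where "C = Bb * (Bs + 1 + Bh)"
  have C: "C > 0" unfolding C_def using Bb Bs Bh by simp
  have ev: "\<forall>\<^sub>F n in sequentially. \<forall>x\<in>{0..L}. dist (S n x) (Shat x) < 1"
    using uniform_limitD[OF S_unif, of 1] by simp
  have "\<forall>\<^sub>F n in sequentially. \<forall>t\<in>{0..L}. \<bar>dI n * I1 n t\<bar> \<le> C * B"
  proof (rule eventually_mono[OF ev], intro ballI)
    fix n t assume close: "\<forall>x\<in>{0..L}. dist (S n x) (Shat x) < 1" and t: "t \<in> {0..L}"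
    have sub: "{0..t} \<subseteq> {0..L}" using t by auto
    have "((\<lambda>x. dI n * I2 n x) has_integral (dI n * I1 n t - dI n * I1 n 0)) {0..t}"
    proof (rule fundamental_theorem_of_calculus)
      show "0 \<le> t" using t by simp
      fix x assume x: "x \<in> {0..t}"
      have "(I1 n has_real_derivative I2 n x) (at x within {0..L})"
        using IC2[of n] x sub unfolding C2_with_def by auto
      then have "((\<lambda>x. dI n * I1 n x) has_real_derivative dI n * I2 n x) (at x within {0..t})"
        by (intro DERIV_cmult DERIV_subset[OF _ sub])
      then show "((\<lambda>x. dI n * I1 n x) has_vector_derivative dI n * I2 n x) (at x within {0..t})"
        by (simp add: has_real_derivative_iff_has_vector_derivative)
    qed
    then have hi: "((\<lambda>x. dI n * I2 n x) has_integral dI n * I1 n t) {0..t}" using I1bc by simp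
    have "dI n * I1 n t = integral {0..t} (\<lambda>x. dI n * I2 n x)"
      using integral_unique[OF hi] by (rule sym)
    also have "\<dots> = integral {0..t} (\<lambda>x. - (\<beta> x * I n x * (S n x - h x)))"
    proof (rule integral_cong)
      fix x assume "x \<in> {0..t}"
      then have "x \<in> {0..L}" using sub by auto
      from Ieq[OF this, of n] show "dI n * I2 n x = - (\<beta> x * I n x * (S n x - h x))" by linarith
    qed
    finally have eq: "dI n * I1 n t = integral {0..t} (\<lambda>x. - (\<beta> x * I n x * (S n x - h x)))" .
    have ct: "continuous_on {0..t} (\<lambda>x. - (\<beta> x * I n x * (S n x - h x)))"
      using continuous_on_subset[OF _ sub] contI contS cont_coef cont_h
      by (intro continuous_intros) auto
    have cI: "continuous_on {0..t} (I n)" using continuous_on_subset[OF contI(1) sub] .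
    have "norm (integral {0..t} (\<lambda>x. - (\<beta> x * I n x * (S n x - h x)))) \<le> integral {0..t} (\<lambda>x. C * I n x)"
    proof (rule Henstock_Kurzweil_Integration.integral_norm_bound_integral)
      show "(\<lambda>x. - (\<beta> x * I n x * (S n x - h x))) integrable_on {0..t}"
        by (rule integrable_continuous_interval[OF ct])
      show "(\<lambda>x. C * I n x) integrable_on {0..t}"
        by (rule integrable_continuous_interval) (intro continuous_intros cI)
      fix x assume x: "x \<in> {0..t}"
      then have xL: "x \<in> {0..L}" using sub by auto
      have a: "\<bar>S n x - Shat x\<bar> < 1" using close xL by (simp add: dist_real_def)
      have b: "\<bar>Shat x\<bar> \<le> Bs" "\<bar>h x\<bar> \<le> Bh" using Bs Bh xL by auto
      have sh: "\<bar>S n x - h x\<bar> \<le> Bs + 1 + Bh" using a b by (smt (verit))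
      have bb: "\<bar>\<beta> x\<bar> \<le> Bb" using Bb xL by auto
      have ip: "I n x > 0" using Ipos xL by auto
      have "\<bar>\<beta> x\<bar> * I n x \<le> Bb * I n x" using bb ip by (intro mult_right_mono) auto
      then have "\<bar>\<beta> x\<bar> * I n x * \<bar>S n x - h x\<bar> \<le> Bb * I n x * (Bs + 1 + Bh)"
        using sh Bb ip by (intro mult_mono) auto
      then show "norm (- (\<beta> x * I n x * (S n x - h x))) \<le> C * I n x"
      proof -
        have "norm (- (\<beta> x * I n x * (S n x - h x))) = \<bar>\<beta> x\<bar> * I n x * \<bar>S n x - h x\<bar>"
          using ip by (simp add: abs_mult)
        also have "\<dots> \<le> Bb * I n x * (Bs + 1 + Bh)" by fact
        also have "\<dots> = C * I n x" unfolding C_def by simp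
        finally show ?thesis .
      qed
    qed
    also have "\<dots> = C * integral {0..t} (I n)" by simp
    also have "\<dots> \<le> C * integral {0..L} (I n)"
      using C by (intro mult_left_mono integral_subset_le sub) (auto intro: integrable_continuous_interval cI Iint Ipos less_imp_le)
    also have "\<dots> \<le> C * B" using C B by (intro mult_left_mono) auto
    finally show "\<bar>dI n * I1 n t\<bar> \<le> C * B" using eq by simp
  qed
  then show ?thesis using that[of "C * B"] C B by simp
qed

lemma u_lim:
  assumes x: "x \<in> {0..L}"
  shows "(\<lambda>n. dI n * I n x) \<longlonglongrightarrow> 0"
proof -
  obtain K where K: "K > 0" "\<forall>\<^sub>F n in sequentially. \<forall>t\<in>{0..L}. \<bar>dI n * I1 n t\<bar> \<le> K"
    using dI1_bound by blast
  obtain B where B: "B > 0" "\<And>n. integral {0..L} (I n) \<le> B" using Ibound by blast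
  show ?thesis unfolding tendsto_iff
  proof (intro allI impI)
    fix e :: real assume e: "e > 0"
    define r where "r = min (L/2) (e / (2*K))"
    have r: "r > 0" "r \<le> L/2" "K * r \<le> e/2"
      unfolding r_def using L_pos e K by (auto simp: min_def field_simps)
    define c where "c = min x (L - r)"
    have c: "0 \<le> c" "c + r \<le> L" "c \<le> x" "x \<le> c + r"
      unfolding c_def using x r L_pos by auto
    have JL: "{c..c+r} \<subseteq> {0..L}" using c by auto
    have "(\<lambda>n. dI n * B / r) \<longlonglongrightarrow> 0 * B / r"
      using r(1) by (intro tendsto_intros dI_lim) auto
    then have ev1: "\<forall>\<^sub>F n in sequentially. dI n * B / r < e/2"
      using e order_tendstoD(2)[of "\<lambda>n. dI n * B / r" 0 sequentially "e/2"] by simp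
    show "\<forall>\<^sub>F n in sequentially. dist (dI n * I n x) 0 < e"
      using ev1 K(2)
    proof eventually_elim
      case (elim n)
      let ?u = "\<lambda>y. dI n * I n y"
      have du: "\<And>z. z \<in> {0..L} \<Longrightarrow> (?u has_real_derivative dI n * I1 n z) (at z within {0..L})"
        using IC2[of n] unfolding C2_with_def by (auto intro!: DERIV_cmult)
      have lip: "\<And>y. y \<in> {0..L} \<Longrightarrow> norm (?u y - ?u x) \<le> K * norm (y - x)"
        by (rule field_differentiable_bound[OF convex_real_interval(5) du]) (use elim x in auto)
      have lower: "\<And>y. y \<in> {c..c+r} \<Longrightarrow> ?u x - K * r \<le> ?u y"
      proof -
        fix y assume y: "y \<in> {c..c+r}"
        then have "\<bar>?u y - ?u x\<bar> \<le> K * \<bar>y - x\<bar>" using lip JL by force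
        moreover have "\<bar>y - x\<bar> \<le> r" using y c by auto
        ultimately show "?u x - K * r \<le> ?u y" using K(1)
          by (smt (verit) mult_left_mono)
      qed
      have cu: "continuous_on {0..L} ?u" by (intro continuous_intros contI)
      have ic: "integral {c..c+r} (\<lambda>_. ?u x - K * r) = (c + r - c) * (?u x - K * r)"
        using r(1) by (simp add: integral_const_real)
      have "r * (?u x - K * r) = integral {c..c+r} (\<lambda>_. ?u x - K * r)"
        unfolding ic by simp
      also have "\<dots> \<le> integral {c..c+r} ?u"
        by (intro integral_le lower) (auto intro!: integrable_continuous_interval continuous_on_subset[OF cu JL])
      also have "\<dots> \<le> integral {0..L} ?u"
        using Ipos dI_pos
        by (intro integral_subset_le JL) (auto intro!: integrable_continuous_interval continuous_on_subset[OF cu JL] cu less_imp_le)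
      also have "\<dots> = dI n * integral {0..L} (I n)" by simp
      also have "\<dots> \<le> dI n * B" using dI_pos B by (intro mult_left_mono) (auto simp: less_imp_le)
      finally have "r * (?u x - K * r) \<le> dI n * B" .
      then have "?u x - K * r \<le> dI n * B / r" using r by (simp add: field_simps)
      then have "?u x < e" using elim r by linarith
      moreover have "?u x > 0" using dI_pos Ipos x by auto
      ultimately show ?case by (simp add: dist_real_def)
    qed
  qed
qed

end

lemma unif_lim_mult:
  fixes f :: "nat \<Rightarrow> real \<Rightarrow> real"
  assumes u: "uniform_limit A f g F" and M: "\<forall>x\<in>A. \<bar>c x\<bar> \<le> M"
  shows "uniform_limit A (\<lambda>n x. c x * (f n x - k)) (\<lambda>x. c x * (g x - k)) F"
  unfolding uniform_limit_iff
proof (intro allI impI)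
  fix e :: real assume e: "e > 0"
  define M' where "M' = max M 1"
  have M': "M' > 0" "\<forall>x\<in>A. \<bar>c x\<bar> \<le> M'" using M unfolding M'_def by force+
  have "\<forall>\<^sub>F n in F. \<forall>x\<in>A. dist (f n x) (g x) < e / M'"
    using uniform_limitD[OF u] e M' by simp
  then show "\<forall>\<^sub>F n in F. \<forall>x\<in>A. dist (c x * (f n x - k)) (c x * (g x - k)) < e"
  proof (rule eventually_mono, intro ballI)
    fix n x assume H: "\<forall>x\<in>A. dist (f n x) (g x) < e / M'" and x: "x \<in> A"
    have "dist (c x * (f n x - k)) (c x * (g x - k)) = \<bar>c x\<bar> * dist (f n x) (g x)"
      by (simp add: dist_real_def abs_mult[symmetric] algebra_simps)
    also have "\<dots> \<le> M' * dist (f n x) (g x)" using M' x by (intro mult_right_mono) auto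
    also have "\<dots> < M' * (e / M')" using H x M' by (intro mult_strict_left_mono) auto
    also have "\<dots> = e" using M' by simp
    finally show "dist (c x * (f n x - k)) (c x * (g x - k)) < e" .
  qed
qed

lemma C2_lin:
  assumes "C2_with A f f1 f2" "C2_with A g g1 g2"
  shows "C2_with A (\<lambda>x. a * f x + b * g x) (\<lambda>x. a * f1 x + b * g1 x) (\<lambda>x. a * f2 x + b * g2 x)"
  using assms unfolding C2_with_def
  by (auto intro!: DERIV_add DERIV_cmult continuous_intros)

context setting2
begin

definition "N x = integral\<^sup>L \<mu> (\<lambda>s. max (x - s) 0 * \<eta> s)"
definition "NL x = integral\<^sup>L \<mu> (\<lambda>s. max (s - x) 0 * \<eta> s)"

lemma Slim: "x \<in> {0..L} \<Longrightarrow> (\<lambda>n. S n x) \<longlonglongrightarrow> Shat x"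
  by (rule tendsto_uniform_limitI[OF S_unif])

lemma Flim: "x \<in> {0..L} \<Longrightarrow> (\<lambda>n. dS * S n x + dI n * I n x) \<longlonglongrightarrow> dS * Shat x"
  using tendsto_add[OF tendsto_mult[OF tendsto_const Slim] u_lim] by simp

lemma int_lim:
  assumes c: "continuous_on {0..L} c"
  shows "(\<lambda>n. integral {0..L} (\<lambda>s. c s * (S n s - \<Lambda>))) \<longlonglongrightarrow> integral {0..L} (\<lambda>s. c s * (Shat s - \<Lambda>))"
proof -
  obtain M where M: "M > 0" "\<forall>x\<in>{0..L}. \<bar>c x\<bar> \<le> M" using bdd_upper[OF c] by blast
  have u: "uniform_limit {0..L} (\<lambda>n s. c s * (S n s - \<Lambda>)) (\<lambda>s. c s * (Shat s - \<Lambda>)) sequentially"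
    by (rule unif_lim_mult[OF S_unif M(2)])
  obtain Iv J where h1: "\<And>n. ((\<lambda>s. c s * (S n s - \<Lambda>)) has_integral Iv n) {0..L}"
    and h2: "((\<lambda>s. c s * (Shat s - \<Lambda>)) has_integral J) {0..L}" and h3: "Iv \<longlonglongrightarrow> J"
    by (rule uniform_limit_integral[OF u]) (auto intro!: continuous_intros c contS)
  have "(\<lambda>n. integral {0..L} (\<lambda>s. c s * (S n s - \<Lambda>))) = Iv"
    by (intro ext integral_unique h1)
  moreover have "integral {0..L} (\<lambda>s. c s * (Shat s - \<Lambda>)) = J" by (rule integral_unique[OF h2])
  ultimately show ?thesis using h3 by simp
qed

lemma PP:
  assumes x: "x \<in> {0..L}"
  shows "dS * Shat x = dS * Shat 0 + Phi L (\<lambda>s. Shat s - \<Lambda>) x + N x"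
    and "dS * Shat x = dS * Shat L + Psi L (\<lambda>s. Shat s - \<Lambda>) x + NL x"
proof -
  define F where "F n y = dS * S n y + dI n * I n y" for n y
  define F2 where "F2 n y = dS * S2 n y + dI n * I2 n y" for n y
  have C: "C2_with {0..L} (F n) (\<lambda>y. dS * S1 n y + dI n * I1 n y) (F2 n)" for n
    unfolding F_def F2_def by (rule C2_lin[OF SC2 IC2])
  have rep': "\<forall>x\<in>{0..L}. F n x = F n 0 + Phi L (F2 n) x \<and> F n x = F n L + Psi L (F2 n) x" for n
    by (rule rep[OF C L_pos]) (auto simp: S1bc I1bc)
  have F2e: "\<forall>s\<in>{0..L}. F2 n s = S n s - \<Lambda> + \<eta> s * I n s" for n
    unfolding F2_def using Feq by auto
  have cI: "continuous_on {0..L} (\<lambda>s. I n s * \<eta> s)" for n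
    using contI cont_coef by (auto intro!: continuous_intros)
  have Phi_split: "Phi L (F2 n) x = integral {0..L} (\<lambda>s. max (x - s) 0 * (S n s - \<Lambda>))
     + integral {0..L} (\<lambda>s. I n s * (max (x - s) 0 * \<eta> s))" for n
  proof -
    have "Phi L (F2 n) x = integral {0..L} (\<lambda>s. max (x - s) 0 * (S n s - \<Lambda>) + I n s * (max (x - s) 0 * \<eta> s))"
      unfolding Phi_def
    proof (rule integral_cong)
      fix s assume "s \<in> {0..L}"
      then have e: "F2 n s = S n s - \<Lambda> + \<eta> s * I n s" using F2e by auto
      show "max (x - s) 0 * F2 n s = max (x - s) 0 * (S n s - \<Lambda>) + I n s * (max (x - s) 0 * \<eta> s)"
        unfolding e by (simp add: algebra_simps)
    qed
    also have "\<dots> = integral {0..L} (\<lambda>s. max (x - s) 0 * (S n s - \<Lambda>))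
     + integral {0..L} (\<lambda>s. I n s * (max (x - s) 0 * \<eta> s))"
      by (rule integral_add) (auto intro!: integrable_continuous_interval continuous_intros contS contI cont_coef)
    finally show ?thesis .
  qed
  have Psi_split: "Psi L (F2 n) x = integral {0..L} (\<lambda>s. max (s - x) 0 * (S n s - \<Lambda>))
     + integral {0..L} (\<lambda>s. I n s * (max (s - x) 0 * \<eta> s))" for n
  proof -
    have "Psi L (F2 n) x = integral {0..L} (\<lambda>s. max (s - x) 0 * (S n s - \<Lambda>) + I n s * (max (s - x) 0 * \<eta> s))"
      unfolding Psi_def
    proof (rule integral_cong)
      fix s assume "s \<in> {0..L}"
      then have e: "F2 n s = S n s - \<Lambda> + \<eta> s * I n s" using F2e by auto
      show "max (s - x) 0 * F2 n s = max (s - x) 0 * (S n s - \<Lambda>) + I n s * (max (s - x) 0 * \<eta> s)"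
        unfolding e by (simp add: algebra_simps)
    qed
    also have "\<dots> = integral {0..L} (\<lambda>s. max (s - x) 0 * (S n s - \<Lambda>))
     + integral {0..L} (\<lambda>s. I n s * (max (s - x) 0 * \<eta> s))"
      by (rule integral_add) (auto intro!: integrable_continuous_interval continuous_intros contS contI cont_coef)
    finally show ?thesis .
  qed
  have l1: "(\<lambda>n. integral {0..L} (\<lambda>s. max (x - s) 0 * (S n s - \<Lambda>))) \<longlonglongrightarrow> Phi L (\<lambda>s. Shat s - \<Lambda>) x"
    unfolding Phi_def by (rule int_lim) (auto intro!: continuous_intros)
  have l2: "(\<lambda>n. integral {0..L} (\<lambda>s. I n s * (max (x - s) 0 * \<eta> s))) \<longlonglongrightarrow> N x"
    unfolding N_def by (rule I_weak[rule_format]) (use cont_coef in \<open>auto intro!: continuous_intros\<close>)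
  have l3: "(\<lambda>n. integral {0..L} (\<lambda>s. max (s - x) 0 * (S n s - \<Lambda>))) \<longlonglongrightarrow> Psi L (\<lambda>s. Shat s - \<Lambda>) x"
    unfolding Psi_def by (rule int_lim) (auto intro!: continuous_intros)
  have l4: "(\<lambda>n. integral {0..L} (\<lambda>s. I n s * (max (s - x) 0 * \<eta> s))) \<longlonglongrightarrow> NL x"
    unfolding NL_def by (rule I_weak[rule_format]) (use cont_coef in \<open>auto intro!: continuous_intros\<close>)
  have x0: "0 \<in> {0..L}" and xL: "L \<in> {0..L}" using L_pos by auto
  have "(\<lambda>n. F n x) \<longlonglongrightarrow> dS * Shat 0 + Phi L (\<lambda>s. Shat s - \<Lambda>) x + N x"
  proof -
    have "(\<lambda>n. F n 0 + (integral {0..L} (\<lambda>s. max (x - s) 0 * (S n s - \<Lambda>))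
     + integral {0..L} (\<lambda>s. I n s * (max (x - s) 0 * \<eta> s)))) \<longlonglongrightarrow> dS * Shat 0 + (Phi L (\<lambda>s. Shat s - \<Lambda>) x + N x)"
      unfolding F_def by (intro tendsto_add Flim[OF x0] l1 l2)
    moreover have "F n x = F n 0 + (integral {0..L} (\<lambda>s. max (x - s) 0 * (S n s - \<Lambda>))
     + integral {0..L} (\<lambda>s. I n s * (max (x - s) 0 * \<eta> s)))" for n
    proof -
      have "F n x = F n 0 + Phi L (F2 n) x" using rep'[of n] x by blast
      then show ?thesis unfolding Phi_split .
    qed
    ultimately show ?thesis by (simp add: add.assoc)
  qed
  moreover have "(\<lambda>n. F n x) \<longlonglongrightarrow> dS * Shat x" unfolding F_def by (rule Flim[OF x])
  ultimately show "dS * Shat x = dS * Shat 0 + Phi L (\<lambda>s. Shat s - \<Lambda>) x + N x"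
    using LIMSEQ_unique by blast
  have "(\<lambda>n. F n x) \<longlonglongrightarrow> dS * Shat L + Psi L (\<lambda>s. Shat s - \<Lambda>) x + NL x"
  proof -
    have "(\<lambda>n. F n L + (integral {0..L} (\<lambda>s. max (s - x) 0 * (S n s - \<Lambda>))
     + integral {0..L} (\<lambda>s. I n s * (max (s - x) 0 * \<eta> s)))) \<longlonglongrightarrow> dS * Shat L + (Psi L (\<lambda>s. Shat s - \<Lambda>) x + NL x)"
      unfolding F_def by (intro tendsto_add Flim[OF xL] l3 l4)
    moreover have "F n x = F n L + (integral {0..L} (\<lambda>s. max (s - x) 0 * (S n s - \<Lambda>))
     + integral {0..L} (\<lambda>s. I n s * (max (s - x) 0 * \<eta> s)))" for n
    proof -
      have "F n x = F n L + Psi L (F2 n) x" using rep'[of n] x by blast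
      then show ?thesis unfolding Psi_split .
    qed
    ultimately show ?thesis by (simp add: add.assoc)
  qed
  moreover have "(\<lambda>n. F n x) \<longlonglongrightarrow> dS * Shat x" unfolding F_def by (rule Flim[OF x])
  ultimately show "dS * Shat x = dS * Shat L + Psi L (\<lambda>s. Shat s - \<Lambda>) x + NL x"
    using LIMSEQ_unique by blast
qed

end

context setting2
begin

lemma space_mu: "space \<mu> = {0..L}"
  using sets_eq_imp_space_eq[OF mu_sets] by (simp add: space_restrict_space)

lemma meas_cont: "continuous_on {0..L} f \<Longrightarrow> f \<in> borel_measurable \<mu>"
  using measurable_cong_sets[OF mu_sets refl] borel_measurable_continuous_on_restrict by blast

lemma sets_mu: "A \<in> sets borel \<Longrightarrow> A \<subseteq> {0..L} \<Longrightarrow> A \<in> sets \<mu>"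
  unfolding mu_sets by (subst sets_restrict_space_iff) auto

lemma int_cont:
  fixes f :: "real \<Rightarrow> real"
  assumes "continuous_on {0..L} f" shows "integrable \<mu> f"
proof -
  obtain M where M: "M > 0" "\<forall>x\<in>{0..L}. \<bar>f x\<bar> \<le> M" using bdd_upper[OF assms] by blast
  show ?thesis
    by (rule finite_measure.integrable_const_bound[OF mu_finite, of _ M])
      (use M space_mu meas_cont[OF assms] in auto)
qed

lemma Zgen:
  fixes P P1 P2 \<zeta> :: "real \<Rightarrow> real"
  assumes ab: "0 \<le> a" "a < b" "b \<le> L"
    and lt: "\<forall>x\<in>{a..b}. Shat x < h x"
    and dP: "\<And>x. (P has_real_derivative P1 x) (at x)"
    and dP1: "\<And>x. (P1 has_real_derivative P2 x) (at x)"
    and cP2: "continuous_on {a..b} P2"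
    and Pnn: "\<forall>x\<in>{a..b}. P x \<ge> 0"
    and bca: "P1 a = 0" "P a = 0 \<or> a = 0"
    and bcb: "P1 b = 0" "P b = 0 \<or> b = L"
    and zc: "continuous_on {0..L} \<zeta>"
    and zin: "\<forall>x\<in>{a..b}. \<zeta> x = P x"
    and zout: "\<forall>x\<in>{0..L} - {a..b}. \<zeta> x = 0"
  shows "integral\<^sup>L \<mu> \<zeta> = 0"
proof -
  have sub: "{a..b} \<subseteq> {0..L}" using ab by auto
  have cIz: "continuous_on {0..L} (\<lambda>x. I n x * \<zeta> x)" for n
    by (intro continuous_intros contI zc)
  have split: "integral {0..L} (\<lambda>x. I n x * \<zeta> x) = integral {a..b} (\<lambda>x. I n x * P x)" for n
  proof -
    have i: "(\<lambda>x. I n x * \<zeta> x) integrable_on {0..L}" by (rule integrable_continuous_interval[OF cIz])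
    have "integral {0..L} (\<lambda>x. I n x * \<zeta> x) = integral {0..b} (\<lambda>x. I n x * \<zeta> x) + integral {b..L} (\<lambda>x. I n x * \<zeta> x)"
      by (rule Henstock_Kurzweil_Integration.integral_combine[symmetric]) (use ab i in auto)
    also have "integral {0..b} (\<lambda>x. I n x * \<zeta> x) = integral {0..a} (\<lambda>x. I n x * \<zeta> x) + integral {a..b} (\<lambda>x. I n x * \<zeta> x)"
      by (rule Henstock_Kurzweil_Integration.integral_combine[symmetric])
        (use ab in \<open>auto intro!: integrable_continuous_interval continuous_on_subset[OF cIz]\<close>)
    also have "integral {0..a} (\<lambda>x. I n x * \<zeta> x) = 0"
    proof (cases "a = 0")
      case True then show ?thesis by simp
    next
      case False
      then have Pa: "P a = 0" using bca by auto
      have "integral {0..a} (\<lambda>x. I n x * \<zeta> x) = integral {0..a} (\<lambda>x. 0)"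
      proof (rule integral_cong)
        fix x assume x: "x \<in> {0..a}"
        show "I n x * \<zeta> x = 0"
        proof (cases "x = a")
          case True then show ?thesis using zin Pa ab by auto
        next
          case False then show ?thesis using zout x ab by auto
        qed
      qed
      then show ?thesis by simp
    qed
    also have "integral {b..L} (\<lambda>x. I n x * \<zeta> x) = 0"
    proof (cases "b = L")
      case True then show ?thesis by simp
    next
      case False
      then have Pb: "P b = 0" using bcb by auto
      have "integral {b..L} (\<lambda>x. I n x * \<zeta> x) = integral {b..L} (\<lambda>x. 0)"
      proof (rule integral_cong)
        fix x assume x: "x \<in> {b..L}"
        show "I n x * \<zeta> x = 0"
        proof (cases "x = b")
          case True then show ?thesis using zin Pb ab by auto
        next
          case False then show ?thesis using zout x ab by auto
        qed
      qed
      then show ?thesis by simp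
    qed
    also have "integral {a..b} (\<lambda>x. I n x * \<zeta> x) = integral {a..b} (\<lambda>x. I n x * P x)"
      by (rule integral_cong) (use zin in auto)
    finally show ?thesis by simp
  qed
  have cd: "continuous_on {0..L} (\<lambda>y. Shat y - h y)" by (intro continuous_intros cont_Shat cont_h)
  obtain x1 where x1: "x1 \<in> {a..b}" "\<forall>y\<in>{a..b}. Shat y - h y \<le> Shat x1 - h x1"
    using continuous_attains_sup[OF compact_Icc _ continuous_on_subset[OF cd sub]] ab by auto
  define ee where "ee = (h x1 - Shat x1) / 2"
  have eps: "ee > 0" unfolding ee_def using lt x1 by auto
  obtain b0 where b0: "b0 > 0" "\<forall>x\<in>{0..L}. b0 \<le> \<beta> x"
    using pos_lower[OF cont_coef(1)] coef_pos by auto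
  define q where "q = b0 * ee"
  have q: "q > 0" unfolding q_def using b0 eps by simp
  obtain M2 where M2: "M2 > 0" "\<forall>x\<in>{a..b}. \<bar>P2 x\<bar> \<le> M2"
  proof -
    obtain c where "\<forall>x\<in>{a..b}. norm (P2 x) \<le> c"
      using compact_imp_bounded[OF compact_continuous_image[OF cP2 compact_Icc]]
      unfolding bounded_iff by auto
    then show ?thesis using that[of "max c 1"] by force
  qed
  obtain B where B: "B > 0" "\<And>n. integral {0..L} (I n) \<le> B" using Ibound by blast
  have ev: "\<forall>\<^sub>F n in sequentially. \<forall>x\<in>{0..L}. dist (S n x) (Shat x) < ee"
    using uniform_limitD[OF S_unif eps] .
  have bound: "\<forall>\<^sub>F n in sequentially. integral {a..b} (\<lambda>x. I n x * P x) \<le> dI n * (M2 * B) / q"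
  proof (rule eventually_mono[OF ev])
    fix n assume close: "\<forall>x\<in>{0..L}. dist (S n x) (Shat x) < ee"
    have dI1: "\<And>x. x \<in> {a..b} \<Longrightarrow> (I n has_real_derivative I1 n x) (at x within {a..b})"
    proof -
      fix x assume x: "x \<in> {a..b}"
      then have "x \<in> {0..L}" using sub by auto
      then have "(I n has_real_derivative I1 n x) (at x within {0..L})" using IC2[of n] unfolding C2_with_def by auto
      then show "(I n has_real_derivative I1 n x) (at x within {a..b})" by (rule DERIV_subset) (rule sub)
    qed
    have dI2: "\<And>x. x \<in> {a..b} \<Longrightarrow> (I1 n has_real_derivative I2 n x) (at x within {a..b})"
    proof -
      fix x assume x: "x \<in> {a..b}"
      then have "x \<in> {0..L}" using sub by auto
      then have "(I1 n has_real_derivative I2 n x) (at x within {0..L})" using IC2[of n] unfolding C2_with_def by auto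
      then show "(I1 n has_real_derivative I2 n x) (at x within {a..b})" by (rule DERIV_subset) (rule sub)
    qed
    have hi: "((\<lambda>x. I2 n x * P x - I n x * P2 x) has_integral
          ((I1 n b * P b - I n b * P1 b) - (I1 n a * P a - I n a * P1 a))) {a..b}"
      by (rule ibp[OF _ dI1 dI2]) (use ab dP dP1 in \<open>auto intro: has_field_derivative_at_within\<close>)
    have bz: "(I1 n b * P b - I n b * P1 b) - (I1 n a * P a - I n a * P1 a) = 0"
      using bca bcb I1bc by auto
    have cP: "continuous_on {a..b} P"
      using dP by (meson DERIV_continuous continuous_at_imp_continuous_on)
    have cI2: "continuous_on {a..b} (I2 n)" "continuous_on {a..b} (I n)"
      using continuous_on_subset[OF contI(3) sub] continuous_on_subset[OF contI(1) sub] by auto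
    have iIP2: "(\<lambda>x. I n x * P2 x) integrable_on {a..b}"
      by (intro integrable_continuous_interval continuous_intros cI2 cP2)
    have iI2P: "(\<lambda>x. I2 n x * P x) integrable_on {a..b}"
      by (intro integrable_continuous_interval continuous_intros cI2 cP)
    have e1: "integral {a..b} (\<lambda>x. I2 n x * P x) = integral {a..b} (\<lambda>x. I n x * P2 x)"
    proof -
      have "integral {a..b} (\<lambda>x. I2 n x * P x - I n x * P2 x) = 0" using integral_unique[OF hi] bz by simp
      then show ?thesis using integral_diff[OF iI2P iIP2] by simp
    qed
    have "q * integral {a..b} (\<lambda>x. I n x * P x) = integral {a..b} (\<lambda>x. q * (I n x * P x))" by simp
    also have "\<dots> \<le> integral {a..b} (\<lambda>x. dI n * I2 n x * P x)"
    proof (rule integral_le)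
      show "(\<lambda>x. q * (I n x * P x)) integrable_on {a..b}"
        by (intro integrable_continuous_interval continuous_intros cI2 cP)
      show "(\<lambda>x. dI n * I2 n x * P x) integrable_on {a..b}"
        by (intro integrable_continuous_interval continuous_intros cI2 cP)
      fix x assume x: "x \<in> {a..b}"
      then have xL: "x \<in> {0..L}" using sub by auto
      have "S n x - h x \<le> - ee"
      proof -
        have "\<bar>S n x - Shat x\<bar> < ee" using close xL by (simp add: dist_real_def)
        then have "S n x - Shat x < ee" by (simp add: abs_less_iff)
        moreover have "Shat x - h x \<le> Shat x1 - h x1" using x1 x by auto
        ultimately have "S n x - h x < ee + (Shat x1 - h x1)" by linarith
        moreover have "Shat x1 - h x1 = - 2 * ee" using ee_def by simp
        ultimately show ?thesis by linarith
      qed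
      then have "\<beta> x * (S n x - h x) \<le> \<beta> x * (- ee)" using coef_pos xL by (intro mult_left_mono) (auto simp: less_imp_le)
      also have "\<dots> \<le> - q" unfolding q_def using b0 xL eps by (simp add: mult_right_mono)
      finally have "q \<le> - (\<beta> x * (S n x - h x))" by simp
      moreover have "I n x * P x \<ge> 0" using Ipos[OF xL, of n] Pnn x by (simp add: less_imp_le)
      ultimately have "q * (I n x * P x) \<le> - (\<beta> x * (S n x - h x)) * (I n x * P x)"
        by (intro mult_right_mono)
      also have "\<dots> = dI n * I2 n x * P x" using Ieq[OF xL, of n] by (simp add: algebra_simps)
      finally show "q * (I n x * P x) \<le> dI n * I2 n x * P x" .
    qed
    also have "\<dots> = dI n * integral {a..b} (\<lambda>x. I n x * P2 x)"
      using e1 by (simp add: mult.assoc)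
    also have "\<dots> \<le> dI n * (M2 * B)"
    proof (rule mult_left_mono)
      show "0 \<le> dI n" using dI_pos by (simp add: less_imp_le)
      have "integral {a..b} (\<lambda>x. I n x * P2 x) \<le> norm (integral {a..b} (\<lambda>x. I n x * P2 x))" by simp
      also have "\<dots> \<le> integral {a..b} (\<lambda>x. M2 * I n x)"
      proof (rule Henstock_Kurzweil_Integration.integral_norm_bound_integral[OF iIP2])
        show "(\<lambda>x. M2 * I n x) integrable_on {a..b}"
          by (intro integrable_continuous_interval continuous_intros cI2)
        fix x assume x: "x \<in> {a..b}"
        then have "I n x > 0" using Ipos sub by auto
        then show "norm (I n x * P2 x) \<le> M2 * I n x"
          using M2 x by (simp add: abs_mult mult.commute mult_right_mono)
      qed
      also have "\<dots> = M2 * integral {a..b} (I n)" by simp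
      also have "\<dots> \<le> M2 * integral {0..L} (I n)"
        using M2 Ipos by (intro mult_left_mono integral_subset_le sub)
          (auto intro!: integrable_continuous_interval cI2 Iint less_imp_le)
      also have "\<dots> \<le> M2 * B" using M2 B by (intro mult_left_mono) auto
      finally show "integral {a..b} (\<lambda>x. I n x * P2 x) \<le> M2 * B" .
    qed
    finally show "integral {a..b} (\<lambda>x. I n x * P x) \<le> dI n * (M2 * B) / q"
      using q by (simp add: field_simps)
  qed
  have nonneg: "integral {a..b} (\<lambda>x. I n x * P x) \<ge> 0" for n
    using Ipos Pnn sub
    by (intro integral_nonneg integrable_continuous_interval)
      (auto intro!: continuous_intros continuous_on_subset[OF contI(1) sub]
        simp: less_imp_le dP[THEN DERIV_continuous] continuous_at_imp_continuous_on)
  have "(\<lambda>n. dI n * (M2 * B) / q) \<longlonglongrightarrow> 0 * (M2 * B) / q"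
    using q by (intro tendsto_intros dI_lim) auto
  then have t0: "(\<lambda>n. dI n * (M2 * B) / q) \<longlonglongrightarrow> 0" by simp
  have "(\<lambda>n. integral {a..b} (\<lambda>x. I n x * P x)) \<longlonglongrightarrow> 0"
  proof (rule tendsto_sandwich[OF _ bound tendsto_const t0])
    show "\<forall>\<^sub>F n in sequentially. 0 \<le> integral {a..b} (\<lambda>x. I n x * P x)"
      using nonneg by (intro always_eventually allI)
  qed
  then have "(\<lambda>n. integral {0..L} (\<lambda>x. I n x * \<zeta> x)) \<longlonglongrightarrow> 0" using split by simp
  moreover have "(\<lambda>n. integral {0..L} (\<lambda>x. I n x * \<zeta> x)) \<longlonglongrightarrow> integral\<^sup>L \<mu> \<zeta>"
    using I_weak zc by blast
  ultimately show ?thesis using LIMSEQ_unique by metis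
qed

end

lemma cubic_d1: "((\<lambda>x. ((x-c)*(d-x))^3) has_real_derivative 3*((x-c)*(d-x))^2*(c+d-2*x)) (at x)"
  by (auto intro!: derivative_eq_intros simp: algebra_simps power2_eq_square)

lemma cubic_d2: "((\<lambda>x. 3*((x-c)*(d-x))^2*(c+d-2*x)) has_real_derivative
   (6*((x-c)*(d-x))*(c+d-2*x)^2 - 6*((x-c)*(d-x))^2)) (at x)"
  by (auto intro!: derivative_eq_intros simp: algebra_simps power2_eq_square)

context setting2
begin

lemma null_from_int:
  fixes \<zeta> :: "real \<Rightarrow> real"
  assumes zc: "continuous_on {0..L} \<zeta>" and nn: "\<forall>x\<in>{0..L}. \<zeta> x \<ge> 0"
    and z0: "integral\<^sup>L \<mu> \<zeta> = 0"
    and A: "A \<in> sets \<mu>" "A \<subseteq> {x\<in>{0..L}. \<zeta> x > 0}"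
  shows "emeasure \<mu> A = 0"
proof -
  have nnae: "AE x in \<mu>. 0 \<le> \<zeta> x" using nn space_mu by (intro AE_I2) auto
  have ae: "AE x in \<mu>. \<zeta> x = 0"
    using integral_nonneg_eq_0_iff_AE[OF int_cont[OF zc] nnae] z0 by simp
  have mz: "\<zeta> \<in> borel_measurable \<mu>" by (rule meas_cont[OF zc])
  have Nset: "{x\<in>space \<mu>. \<zeta> x \<noteq> 0} \<in> sets \<mu>" using mz by measurable
  have "emeasure \<mu> {x\<in>space \<mu>. \<zeta> x \<noteq> 0} = 0"
    using AE_iff_measurable[OF Nset, of "\<lambda>x. \<zeta> x = 0"] ae by auto
  moreover have "A \<subseteq> {x\<in>space \<mu>. \<zeta> x \<noteq> 0}" using A(2) space_mu by auto
  ultimately show ?thesis using emeasure_mono[OF _ Nset] A(1) by (metis le_zero_eq)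
qed

lemma Zmid:
  assumes ab: "0 < a" "a < b" "b < L" and lt: "\<forall>x\<in>{a..b}. Shat x < h x"
  shows "emeasure \<mu> {a<..<b} = 0"
proof -
  define \<zeta> where "\<zeta> x = (max 0 ((x-a)*(b-x)))^3" for x
  have zc: "continuous_on {0..L} \<zeta>" unfolding \<zeta>_def by (intro continuous_intros)
  have "integral\<^sup>L \<mu> \<zeta> = 0"
  proof (rule Zgen[OF _ _ _ lt cubic_d1 cubic_d2, where \<zeta>=\<zeta>])
    show "continuous_on {a..b} (\<lambda>x. 6*((x-a)*(b-x))*(a+b-2*x)^2 - 6*((x-a)*(b-x))^2)"
      by (intro continuous_intros)
    show "\<forall>x\<in>{a..b}. ((x-a)*(b-x))^3 \<ge> 0" by auto
    show "\<forall>x\<in>{a..b}. \<zeta> x = ((x-a)*(b-x))^3" unfolding \<zeta>_def by auto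
    show "\<forall>x\<in>{0..L} - {a..b}. \<zeta> x = 0"
    proof
      fix x assume "x \<in> {0..L} - {a..b}"
      then have "x < a \<or> b < x" by auto
      then have "(x-a)*(b-x) \<le> 0"
        using ab by (auto simp: mult_le_0_iff)
      then show "\<zeta> x = 0" unfolding \<zeta>_def by (simp add: max_def)
    qed
  qed (use ab zc in auto)
  moreover have "{a<..<b} \<in> sets \<mu>" using ab by (intro sets_mu) auto
  moreover have "{a<..<b} \<subseteq> {x\<in>{0..L}. \<zeta> x > 0}" using ab unfolding \<zeta>_def by (auto simp: max_def)
  ultimately show ?thesis
    using null_from_int[OF zc] unfolding \<zeta>_def by (auto simp: max_def)
qed

lemma Zleft:
  assumes ab: "0 < b" "b < L" and lt: "\<forall>x\<in>{0..b}. Shat x < h x"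
  shows "emeasure \<mu> {0..<b} = 0"
proof -
  define \<zeta> where "\<zeta> x = (max 0 ((x-(-b))*(b-x)))^3" for x
  have zc: "continuous_on {0..L} \<zeta>" unfolding \<zeta>_def by (intro continuous_intros)
  have "integral\<^sup>L \<mu> \<zeta> = 0"
  proof (rule Zgen[OF _ _ _ lt cubic_d1 cubic_d2, where \<zeta>=\<zeta>])
    show "continuous_on {0..b} (\<lambda>x. 6*((x-(-b))*(b-x))*(-b+b-2*x)^2 - 6*((x-(-b))*(b-x))^2)"
      by (intro continuous_intros)
    show "\<forall>x\<in>{0..b}. ((x-(-b))*(b-x))^3 \<ge> 0" using ab by auto
    show "\<forall>x\<in>{0..b}. \<zeta> x = ((x-(-b))*(b-x))^3" unfolding \<zeta>_def using ab by auto
    show "\<forall>x\<in>{0..L} - {0..b}. \<zeta> x = 0"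
    proof
      fix x assume "x \<in> {0..L} - {0..b}"
      then have "b < x" "0 \<le> x" by auto
      then have "(x-(-b))*(b-x) \<le> 0" using ab by (auto simp: mult_le_0_iff)
      then show "\<zeta> x = 0" unfolding \<zeta>_def by (simp add: max_def)
    qed
  qed (use ab zc in auto)
  moreover have "{0..<b} \<in> sets \<mu>" using ab by (intro sets_mu) auto
  moreover have "{0..<b} \<subseteq> {x\<in>{0..L}. \<zeta> x > 0}" using ab unfolding \<zeta>_def by (auto simp: max_def)
  ultimately show ?thesis
    using null_from_int[OF zc] unfolding \<zeta>_def by (auto simp: max_def)
qed

lemma Zright:
  assumes ab: "0 < a" "a < L" and lt: "\<forall>x\<in>{a..L}. Shat x < h x"
  shows "emeasure \<mu> {a<..L} = 0"
proof -
  define \<zeta> where "\<zeta> x = (max 0 ((x-a)*((2*L-a)-x)))^3" for x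
  have zc: "continuous_on {0..L} \<zeta>" unfolding \<zeta>_def by (intro continuous_intros)
  have "integral\<^sup>L \<mu> \<zeta> = 0"
  proof (rule Zgen[OF _ _ _ lt cubic_d1 cubic_d2, where \<zeta>=\<zeta>])
    show "continuous_on {a..L} (\<lambda>x. 6*((x-a)*((2*L-a)-x))*(a+(2*L-a)-2*x)^2 - 6*((x-a)*((2*L-a)-x))^2)"
      by (intro continuous_intros)
    show "\<forall>x\<in>{a..L}. ((x-a)*((2*L-a)-x))^3 \<ge> 0" using ab by auto
    show "\<forall>x\<in>{a..L}. \<zeta> x = ((x-a)*((2*L-a)-x))^3" unfolding \<zeta>_def using ab by auto
    show "\<forall>x\<in>{0..L} - {a..L}. \<zeta> x = 0"
    proof
      fix x assume "x \<in> {0..L} - {a..L}"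
      then have "x < a" by auto
      then have "(x-a)*((2*L-a)-x) \<le> 0" using ab by (auto simp: mult_le_0_iff)
      then show "\<zeta> x = 0" unfolding \<zeta>_def by (simp add: max_def)
    qed
  qed (use ab zc in auto)
  moreover have "{a<..L} \<in> sets \<mu>" using ab by (intro sets_mu) auto
  moreover have "{a<..L} \<subseteq> {x\<in>{0..L}. \<zeta> x > 0}" using ab unfolding \<zeta>_def by (auto simp: max_def)
  ultimately show ?thesis
    using null_from_int[OF zc] unfolding \<zeta>_def by (auto simp: max_def)
qed

lemma Shat_le_h:
  assumes x0: "x0 \<in> {0..L}"
  shows "Shat x0 \<le> h x0"
proof (rule ccontr)
  assume "\<not> Shat x0 \<le> h x0"
  then have gt: "h x0 < Shat x0" by simp
  define ee where "ee = (Shat x0 - h x0) / 2"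
  have ee: "ee > 0" unfolding ee_def using gt by simp
  have cg: "continuous_on {0..L} (\<lambda>y. Shat y - h y)" by (intro continuous_intros cont_Shat cont_h)
  obtain \<delta> where \<delta>: "\<delta> > 0" "\<forall>y\<in>{0..L}. dist y x0 < \<delta> \<longrightarrow> dist (Shat y - h y) (Shat x0 - h x0) < ee"
    using cg x0 ee unfolding continuous_on_iff by blast
  define r where "r = min (\<delta>/2) (L/2)"
  have r: "r > 0" "r < \<delta>" "r \<le> L/2" unfolding r_def using \<delta> L_pos by auto
  define a where "a = min x0 (L - r)"
  define b where "b = a + r"
  have ab: "0 \<le> a" "a < b" "b \<le> L" "a \<le> x0" "x0 \<le> b"
    unfolding b_def a_def using x0 r by auto
  have sub: "{a..b} \<subseteq> {0..L}" using ab by auto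
  have big: "\<forall>y\<in>{a..b}. Shat y - h y \<ge> ee"
  proof
    fix y assume y: "y \<in> {a..b}"
    then have "dist y x0 < \<delta>" using ab r unfolding b_def by (auto simp: dist_real_def)
    then have "\<bar>(Shat y - h y) - (Shat x0 - h x0)\<bar> < ee" using \<delta> y sub by (auto simp: dist_real_def)
    then have "Shat y - h y > (Shat x0 - h x0) - ee" by (simp add: abs_less_iff)
    moreover have "(Shat x0 - h x0) - ee = ee" unfolding ee_def by (simp add: field_simps)
    ultimately show "Shat y - h y \<ge> ee" by linarith
  qed
  obtain b0 where b0: "b0 > 0" "\<forall>x\<in>{0..L}. b0 \<le> \<beta> x"
    using pos_lower[OF cont_coef(1)] coef_pos by auto
  define q where "q = b0 * (ee / 2)"
  have q: "q > 0" unfolding q_def using b0 ee by simp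
  define k where "k = pi / r"
  have k: "k > 0" unfolding k_def using r by simp
  have kr: "k * (b - a) = pi" unfolding k_def b_def using r by simp
  have ev1: "\<forall>\<^sub>F n in sequentially. \<forall>x\<in>{0..L}. dist (S n x) (Shat x) < ee / 2"
    using uniform_limitD[OF S_unif, of "ee/2"] ee by simp
  have "(\<lambda>n. dI n * k^2) \<longlonglongrightarrow> 0 * k^2" by (intro tendsto_intros dI_lim)
  then have ev2: "\<forall>\<^sub>F n in sequentially. dI n * k^2 < q"
    using q order_tendstoD(2)[of "\<lambda>n. dI n * k^2" 0 sequentially q] by simp
  obtain n where close: "\<forall>x\<in>{0..L}. dist (S n x) (Shat x) < ee / 2" and small: "dI n * k^2 < q"
    using eventually_happens'[OF sequentially_bot eventually_conj[OF ev1 ev2]] by blast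
  define \<psi> where "\<psi> x = sin (k * (x - a))" for x
  define \<psi>1 where "\<psi>1 x = k * cos (k * (x - a))" for x
  define \<psi>2 where "\<psi>2 x = - (k^2) * sin (k * (x - a))" for x
  have d\<psi>: "(\<psi> has_real_derivative \<psi>1 x) (at x within {a..b})" for x
    unfolding \<psi>_def \<psi>1_def by (auto intro!: derivative_eq_intros)
  have d\<psi>1: "(\<psi>1 has_real_derivative \<psi>2 x) (at x within {a..b})" for x
    unfolding \<psi>1_def \<psi>2_def by (auto intro!: derivative_eq_intros simp: power2_eq_square)
  have dI1: "\<And>x. x \<in> {a..b} \<Longrightarrow> (I n has_real_derivative I1 n x) (at x within {a..b})"
  proof -
    fix x assume x: "x \<in> {a..b}"
    then have "x \<in> {0..L}" using sub by auto
    then have "(I n has_real_derivative I1 n x) (at x within {0..L})" using IC2[of n] unfolding C2_with_def by auto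
    then show "(I n has_real_derivative I1 n x) (at x within {a..b})" by (rule DERIV_subset) (rule sub)
  qed
  have dI2: "\<And>x. x \<in> {a..b} \<Longrightarrow> (I1 n has_real_derivative I2 n x) (at x within {a..b})"
  proof -
    fix x assume x: "x \<in> {a..b}"
    then have "x \<in> {0..L}" using sub by auto
    then have "(I1 n has_real_derivative I2 n x) (at x within {0..L})" using IC2[of n] unfolding C2_with_def by auto
    then show "(I1 n has_real_derivative I2 n x) (at x within {a..b})" by (rule DERIV_subset) (rule sub)
  qed
  have hi: "((\<lambda>x. I2 n x * \<psi> x - I n x * \<psi>2 x) has_integral
          ((I1 n b * \<psi> b - I n b * \<psi>1 b) - (I1 n a * \<psi> a - I n a * \<psi>1 a))) {a..b}"
    by (rule ibp[OF _ dI1 dI2 d\<psi> d\<psi>1]) (use ab in auto)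
  have \<psi>ab: "\<psi> a = 0" "\<psi> b = 0" "\<psi>1 a = k" "\<psi>1 b = - k"
    unfolding \<psi>_def \<psi>1_def using kr by auto
  have bdry: "(I1 n b * \<psi> b - I n b * \<psi>1 b) - (I1 n a * \<psi> a - I n a * \<psi>1 a) = k * (I n a + I n b)"
    using \<psi>ab by (simp add: algebra_simps)
  have bpos: "k * (I n a + I n b) \<ge> 0"
  proof -
    have "I n a > 0" "I n b > 0" using Ipos ab by auto
    then show ?thesis using k by simp
  qed
  have \<psi>nn: "\<forall>x\<in>{a..b}. \<psi> x \<ge> 0"
  proof
    fix x assume x: "x \<in> {a..b}"
    have "0 \<le> k * (x - a)" using x k by simp
    moreover have "k * (x - a) \<le> k * (b - a)" using x k by (intro mult_left_mono) auto
    ultimately have "0 \<le> k * (x - a)" "k * (x - a) \<le> pi" using kr by auto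
    then show "\<psi> x \<ge> 0" unfolding \<psi>_def by (rule sin_ge_zero)
  qed
  have c\<psi>: "continuous_on {a..b} \<psi>" unfolding \<psi>_def by (intro continuous_intros)
  have cI: "continuous_on {a..b} (I n)" "continuous_on {a..b} (I2 n)"
    using continuous_on_subset[OF contI(1) sub] continuous_on_subset[OF contI(3) sub] by auto
  define A where "A = integral {a..b} (\<lambda>x. I n x * \<psi> x)"
  have iA: "(\<lambda>x. I n x * \<psi> x) integrable_on {a..b}"
    by (intro integrable_continuous_interval continuous_intros cI c\<psi>)
  have Ipsi: "\<And>x. x \<in> {a..b} \<Longrightarrow> 0 \<le> I n x * \<psi> x"
  proof -
    fix x assume x: "x \<in> {a..b}"
    then have "I n x > 0" using Ipos sub by auto
    then show "0 \<le> I n x * \<psi> x" using \<psi>nn x by simp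
  qed
  have A0: "A \<ge> 0" unfolding A_def
    using Ipsi by (intro integral_nonneg iA) auto
  have i2: "(\<lambda>x. I2 n x * \<psi> x) integrable_on {a..b}"
    by (intro integrable_continuous_interval continuous_intros cI c\<psi>)
  have i3: "(\<lambda>x. I n x * \<psi>2 x) integrable_on {a..b}"
    unfolding \<psi>2_def by (intro integrable_continuous_interval continuous_intros cI)
  have "integral {a..b} (\<lambda>x. I2 n x * \<psi> x) - integral {a..b} (\<lambda>x. I n x * \<psi>2 x) = k * (I n a + I n b)"
    using integral_unique[OF hi] bdry integral_diff[OF i2 i3] by simp
  moreover have "integral {a..b} (\<lambda>x. I n x * \<psi>2 x) = - (k^2) * A"
  proof -
    have "integral {a..b} (\<lambda>x. I n x * \<psi>2 x) = integral {a..b} (\<lambda>x. - (k^2) * (I n x * \<psi> x))"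
      unfolding \<psi>2_def \<psi>_def by (simp add: algebra_simps)
    also have "\<dots> = - (k^2) * A" unfolding A_def by (rule integral_mult_right)
    finally show ?thesis .
  qed
  ultimately have lowI: "integral {a..b} (\<lambda>x. I2 n x * \<psi> x) \<ge> - (k^2) * A" using bpos by linarith
  have upI: "dI n * integral {a..b} (\<lambda>x. I2 n x * \<psi> x) \<le> - q * A"
  proof -
    have "dI n * integral {a..b} (\<lambda>x. I2 n x * \<psi> x) = integral {a..b} (\<lambda>x. dI n * I2 n x * \<psi> x)"
      by (simp add: mult.assoc)
    also have "\<dots> \<le> integral {a..b} (\<lambda>x. - q * (I n x * \<psi> x))"
    proof (rule integral_le)
      show "(\<lambda>x. dI n * I2 n x * \<psi> x) integrable_on {a..b}"
        by (intro integrable_continuous_interval continuous_intros cI c\<psi>)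
      show "(\<lambda>x. - q * (I n x * \<psi> x)) integrable_on {a..b}"
        by (intro integrable_continuous_interval continuous_intros cI c\<psi>)
      fix x assume x: "x \<in> {a..b}"
      then have xL: "x \<in> {0..L}" using sub by auto
      have "\<bar>S n x - Shat x\<bar> < ee / 2" using close xL by (simp add: dist_real_def)
      then have "S n x - Shat x > - (ee/2)" unfolding abs_less_iff by linarith
      moreover have "Shat x - h x \<ge> ee" using big x by auto
      ultimately have sh: "S n x - h x \<ge> ee / 2" by linarith
      have "q \<le> \<beta> x * (ee / 2)" unfolding q_def using b0 xL ee by (intro mult_right_mono) auto
      also have "\<dots> \<le> \<beta> x * (S n x - h x)" using sh coef_pos xL by (intro mult_left_mono) (auto simp: less_imp_le)
      finally have qb: "q \<le> \<beta> x * (S n x - h x)" .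
      have ip: "I n x * \<psi> x \<ge> 0" using Ipos[OF xL, of n] \<psi>nn x by (simp add: less_imp_le)
      have "dI n * I2 n x * \<psi> x = - (\<beta> x * (S n x - h x)) * (I n x * \<psi> x)"
        using Ieq[OF xL, of n] by (simp add: algebra_simps)
      also have "\<dots> \<le> - q * (I n x * \<psi> x)" using qb ip by (intro mult_right_mono) auto
      finally show "dI n * I2 n x * \<psi> x \<le> - q * (I n x * \<psi> x)" .
    qed
    also have "\<dots> = - q * A" unfolding A_def by simp
    finally show ?thesis .
  qed
  have "dI n * (- (k^2) * A) \<le> dI n * integral {a..b} (\<lambda>x. I2 n x * \<psi> x)"
    using lowI dI_pos by (intro mult_left_mono) (auto simp: less_imp_le)
  then have "(q - dI n * k^2) * A \<le> 0" using upI by (simp add: algebra_simps)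
  then have A00: "A = 0" using A0 small by (smt (verit) mult_pos_pos)
  define m where "m = a + r / 2"
  have m: "m \<in> {a..b}" unfolding m_def b_def using r by auto
  have "I n m * \<psi> m = 0"
  proof (rule has_integral_0_cbox_imp_0[of a b "\<lambda>x. I n x * \<psi> x"])
    show "continuous_on (cbox a b) (\<lambda>x. I n x * \<psi> x)" by (auto intro!: continuous_intros cI c\<psi>)
    show "\<And>x. x \<in> box a b \<Longrightarrow> 0 \<le> I n x * \<psi> x"
      using Ipsi by (auto simp: box_real)
    show "((\<lambda>x. I n x * \<psi> x) has_integral 0) (cbox a b)"
      using iA A00 unfolding A_def by (simp add: has_integral_iff)
    show "box a b \<noteq> {}" using ab by auto
    show "m \<in> cbox a b" using m by auto
  qed
  moreover have "\<psi> m = 1" unfolding \<psi>_def m_def k_def using r by simp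
  moreover have "I n m > 0" using Ipos m sub by auto
  ultimately show False by simp
qed

end

lemma dq_lower:
  fixes f :: "real \<Rightarrow> real"
  assumes "(f has_real_derivative D) (at z within S)" "at z within S \<noteq> bot"
    "\<forall>\<^sub>F y in at z within S. c \<le> (f y - f z) / (y - z)"
  shows "c \<le> D"
  using assms(1) unfolding has_field_derivative_iff
  by (rule tendsto_lowerbound[OF _ assms(3) assms(2)])

lemma dq_upper:
  fixes f :: "real \<Rightarrow> real"
  assumes "(f has_real_derivative D) (at z within S)" "at z within S \<noteq> bot"
    "\<forall>\<^sub>F y in at z within S. (f y - f z) / (y - z) \<le> c"
  shows "D \<le> c"
  using assms(1) unfolding has_field_derivative_iff
  by (rule tendsto_upperbound[OF _ assms(3) assms(2)])

context setting2
begin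

definition "hmin = Inf (h ` {0..L})"

lemma h_bdd: "bdd_below (h ` {0..L})"
  by (rule bounded_imp_bdd_below[OF compact_imp_bounded[OF compact_continuous_image[OF cont_h(1) compact_Icc]]])

lemma h_ge_min: "x \<in> {0..L} \<Longrightarrow> hmin \<le> h x"
  unfolding hmin_def using h_bdd by (auto intro: cInf_lower)

lemma h_theta: "x \<in> {0..L} \<Longrightarrow> h x = hmin \<longleftrightarrow> x \<in> {\<rho>1..\<rho>2}"
  using Theta unfolding hmin_def by (auto simp: set_eq_iff)

lemma rho_in: "\<rho>1 \<in> {0..L}" "\<rho>2 \<in> {0..L}" using rho by auto

lemma h_rho: "h \<rho>1 = hmin" "h \<rho>2 = hmin"
  using h_theta rho_in rho by auto

lemma interior_Icc': "x \<in> {0<..<L} \<Longrightarrow> x \<in> interior {0..L}" by simp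

lemma C2_at:
  assumes "C2_with {0..L} f f1 f2" "x \<in> {0<..<L}"
  shows "(f has_real_derivative f1 x) (at x)" "(f1 has_real_derivative f2 x) (at x)"
proof -
  have e: "at x within {0..L} = at x" using at_within_interior[OF interior_Icc'[OF assms(2)]] .
  have "x \<in> {0..L}" using assms(2) by auto
  then show "(f has_real_derivative f1 x) (at x)" "(f1 has_real_derivative f2 x) (at x)"
    using assms(1) unfolding C2_with_def e[symmetric] by auto
qed

lemma h_d: "x \<in> {0<..<L} \<Longrightarrow> (h has_real_derivative h1 x) (at x)"
  "x \<in> {0<..<L} \<Longrightarrow> (h1 has_real_derivative h2 x) (at x)"
  using C2_at[OF h_C2] by auto

lemma h1_zero: assumes x: "x \<in> {\<rho>1..\<rho>2}" shows "h1 x = 0"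
proof -
  have xo: "x \<in> {0<..<L}" using x rho by auto
  show ?thesis
  proof (rule DERIV_local_min[OF h_d(1)[OF xo]])
    show "0 < min x (L - x)" using xo by auto
    show "\<forall>y. \<bar>x - y\<bar> < min x (L - x) \<longrightarrow> h x \<le> h y"
    proof (intro allI impI)
      fix y assume "\<bar>x - y\<bar> < min x (L - x)"
      then have "y \<in> {0..L}" by auto
      moreover have "h x = hmin" using h_theta x xo by auto
      ultimately show "h x \<le> h y" using h_ge_min by auto
    qed
  qed
qed

lemma h1_mono_all:
  assumes xy: "x \<le> y" "x \<in> {0..L}" "y \<in> {0..L}"
  shows "h1 x \<le> h1 y"
proof -
  have m: "\<And>u v. u \<in> {0..\<rho>1} \<union> {\<rho>2..L} \<Longrightarrow> v \<in> {0..\<rho>1} \<union> {\<rho>2..L} \<Longrightarrow> u \<le> v \<Longrightarrow> h1 u \<le> h1 v"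
    using h1_mono unfolding mono_on_def by blast
  have z1: "h1 \<rho>1 = 0" and z2: "h1 \<rho>2 = 0" using h1_zero rho by auto
  consider "x \<le> \<rho>1" | "\<rho>1 \<le> x \<and> x \<le> \<rho>2" | "\<rho>2 \<le> x" by linarith
  then show ?thesis
  proof cases
    case 1
    then have a: "h1 x \<le> 0" using m[of x \<rho>1] xy rho z1 by auto
    consider "y \<le> \<rho>1" | "\<rho>1 \<le> y \<and> y \<le> \<rho>2" | "\<rho>2 \<le> y" by linarith
    then show ?thesis
    proof cases
      case 1 then show ?thesis using m[of x y] xy \<open>x \<le> \<rho>1\<close> by auto
    next
      case 2 then show ?thesis using a h1_zero by auto
    next
      case 3 then show ?thesis using m[of x y] xy \<open>x \<le> \<rho>1\<close> by auto
    qed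
  next
    case 2
    then have a: "h1 x = 0" using h1_zero by auto
    consider "\<rho>1 \<le> y \<and> y \<le> \<rho>2" | "\<rho>2 \<le> y" using xy 2 by linarith
    then show ?thesis
    proof cases
      case 1 then show ?thesis using a h1_zero by auto
    next
      case 2 then show ?thesis using m[of \<rho>2 y] xy a z2 rho by auto
    qed
  next
    case 3 then show ?thesis using m[of x y] xy by auto
  qed
qed

lemma h_const_zero:
  assumes "a \<le> b" "{a..b} \<subseteq> {0..L}" "\<forall>x\<in>{a..b}. h1 x = 0"
  shows "h a = h b"
proof -
  have "\<And>x. x \<in> {a..b} \<Longrightarrow> (h has_real_derivative 0) (at x within {a..b})"
  proof -
    fix x assume x: "x \<in> {a..b}"
    then have "(h has_real_derivative h1 x) (at x within {0..L})" using h_C2 assms(2) unfolding C2_with_def by auto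
    then have "(h has_real_derivative h1 x) (at x within {a..b})" by (rule DERIV_subset) (rule assms(2))
    then show "(h has_real_derivative 0) (at x within {a..b})" using assms(3) x by simp
  qed
  then obtain c where "\<forall>x\<in>{a..b}. h x = c"
    using has_field_derivative_zero_constant[of "{a..b}" h] by auto
  then show ?thesis using assms(1) by auto
qed

lemma h1_0: "h1 0 < 0"
proof -
  have le: "h1 0 \<le> 0" using h1_mono_all[of 0 \<rho>1] rho h1_zero by auto
  show ?thesis
  proof (rule ccontr)
    assume "\<not> h1 0 < 0"
    then have z: "h1 0 = 0" using le by simp
    have "\<forall>x\<in>{0..\<rho>1}. h1 x = 0"
    proof
      fix x assume x: "x \<in> {0..\<rho>1}"
      then have "h1 0 \<le> h1 x" "h1 x \<le> h1 \<rho>1" using h1_mono_all rho by auto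
      then show "h1 x = 0" using z h1_zero rho by auto
    qed
    then have "h 0 = h \<rho>1" using h_const_zero[of 0 \<rho>1] rho by auto
    then have "h 0 = hmin" using h_rho by simp
    then have "0 \<in> {\<rho>1..\<rho>2}" using h_theta L_pos by auto
    then show False using rho by auto
  qed
qed

lemma h1_L: "h1 L > 0"
proof -
  have le: "h1 L \<ge> 0" using h1_mono_all[of \<rho>2 L] rho h1_zero by auto
  show ?thesis
  proof (rule ccontr)
    assume "\<not> h1 L > 0"
    then have z: "h1 L = 0" using le by simp
    have "\<forall>x\<in>{\<rho>2..L}. h1 x = 0"
    proof
      fix x assume x: "x \<in> {\<rho>2..L}"
      then have "h1 \<rho>2 \<le> h1 x" "h1 x \<le> h1 L" using h1_mono_all rho by auto
      then show "h1 x = 0" using z h1_zero rho by auto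
    qed
    then have "h \<rho>2 = h L" using h_const_zero[of \<rho>2 L] rho by auto
    then have "h L = hmin" using h_rho by simp
    then have "L \<in> {\<rho>1..\<rho>2}" using h_theta L_pos by auto
    then show False using rho by auto
  qed
qed

definition "G x = integral {0..x} (\<lambda>s. Shat s - \<Lambda>)"

lemma cfS: "continuous_on {0..L} (\<lambda>s. Shat s - \<Lambda>)" by (intro continuous_intros cont_Shat)

lemma fS_neg: obtains g0 where "g0 > 0" "\<forall>x\<in>{0..L}. Shat x - \<Lambda> \<le> - g0"
proof -
  have c: "continuous_on {0..L} (\<lambda>x. \<Lambda> - h x)" by (intro continuous_intros cont_h)
  obtain g0 where g0: "g0 > 0" "\<forall>x\<in>{0..L}. g0 \<le> \<Lambda> - h x"
    using pos_lower[OF c] Lambda_gt_h by auto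
  have "\<forall>x\<in>{0..L}. Shat x - \<Lambda> \<le> - g0" using g0 Shat_le_h by force
  then show ?thesis using that g0 by blast
qed

lemma G_deriv: "x \<in> {0..L} \<Longrightarrow> (G has_real_derivative Shat x - \<Lambda>) (at x within {0..L})"
  unfolding G_def by (rule integral_has_real_derivative[OF cfS])

lemma G_at: "x \<in> {0<..<L} \<Longrightarrow> (G has_real_derivative Shat x - \<Lambda>) (at x)"
  using G_deriv[of x] at_within_interior[OF interior_Icc'[of x]] by auto

lemma G0: "G 0 = 0" unfolding G_def by simp

lemma G_cont: "continuous_on {0..L} G"
  using G_deriv by (meson DERIV_continuous continuous_on_eq_continuous_within)

lemma G_strict: assumes "0 \<le> x" "x < y" "y \<le> L" shows "G y < G x"
proof (rule DERIV_neg_imp_decreasing_open[OF assms(2)])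
  fix z assume "x < z" "z < y"
  then have z: "z \<in> {0<..<L}" using assms by auto
  have zz: "z \<in> {0..L}" using z by auto
  have "Shat z - \<Lambda> < 0" using Shat_le_h[OF zz] Lambda_gt_h zz by force
  then show "\<exists>d. (G has_real_derivative d) (at z) \<and> d < 0" using G_at[OF z] by blast
next
  show "continuous_on {x..y} G" by (rule continuous_on_subset[OF G_cont]) (use assms in auto)
qed

definition "Cset = {x\<in>{0..L}. Shat x = h x}"

lemma C_closed: "closed Cset"
proof -
  have "closed {x\<in>{0..L}. Shat x - h x = 0}"
    by (rule continuous_closed_preimage_constant) (auto intro!: continuous_intros cont_Shat cont_h)
  then show ?thesis unfolding Cset_def by simp
qed

lemma mu_space_null_imp:
  assumes "emeasure \<mu> (space \<mu>) = 0"
  shows "integral\<^sup>L \<mu> f = 0"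
proof (rule integral_eq_zero_AE)
  have "space \<mu> \<in> null_sets \<mu>" using assms by auto
  then show "AE x in \<mu>. f x = 0" by (rule AE_I') auto
qed

lemma C_ne: "Cset \<noteq> {}"
proof
  assume e: "Cset = {}"
  then have lt: "\<forall>x\<in>{0..L}. Shat x < h x" using Shat_le_h unfolding Cset_def by force
  have z1: "emeasure \<mu> {0..<3*L/4} = 0" by (rule Zleft) (use L_pos lt in auto)
  have z2: "emeasure \<mu> {L/4<..L} = 0" by (rule Zright) (use L_pos lt in auto)
  have s1: "{0..<3*L/4} \<in> sets \<mu>" "{L/4<..L} \<in> sets \<mu>" using L_pos by (auto intro!: sets_mu)
  have "emeasure \<mu> (space \<mu>) \<le> emeasure \<mu> ({0..<3*L/4} \<union> {L/4<..L})"
    using s1 space_mu L_pos by (intro emeasure_mono) auto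
  also have "\<dots> \<le> emeasure \<mu> {0..<3*L/4} + emeasure \<mu> {L/4<..L}"
    using s1 by (rule emeasure_subadditive)
  finally have sp: "emeasure \<mu> (space \<mu>) = 0" using z1 z2 by simp
  have "N L = 0" unfolding N_def by (rule mu_space_null_imp[OF sp])
  moreover have "NL 0 = 0" unfolding NL_def by (rule mu_space_null_imp[OF sp])
  moreover have "dS * Shat L = dS * Shat 0 + Phi L (\<lambda>s. Shat s - \<Lambda>) L + N L" using PP(1)[of L] L_pos by simp
  moreover have "dS * Shat 0 = dS * Shat L + Psi L (\<lambda>s. Shat s - \<Lambda>) 0 + NL 0" using PP(2)[of 0] L_pos by simp
  ultimately have sum0: "Phi L (\<lambda>s. Shat s - \<Lambda>) L + Psi L (\<lambda>s. Shat s - \<Lambda>) 0 = 0" by linarith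
  have "Phi L (\<lambda>s. Shat s - \<Lambda>) L + Psi L (\<lambda>s. Shat s - \<Lambda>) 0 = integral {0..L} (\<lambda>s. max (L - s) 0 * (Shat s - \<Lambda>) + max (s - 0) 0 * (Shat s - \<Lambda>))"
    unfolding Phi_def Psi_def
    by (rule integral_add[symmetric]) (auto intro!: integrable_continuous_interval continuous_intros cont_Shat)
  also have "\<dots> = integral {0..L} (\<lambda>s. L * (Shat s - \<Lambda>))"
    by (rule integral_cong) (auto simp: max_def algebra_simps)
  also have "\<dots> = L * integral {0..L} (\<lambda>s. Shat s - \<Lambda>)" by simp
  finally have eq: "Phi L (\<lambda>s. Shat s - \<Lambda>) L + Psi L (\<lambda>s. Shat s - \<Lambda>) 0 = L * integral {0..L} (\<lambda>s. Shat s - \<Lambda>)" .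
  obtain g0 where g0: "g0 > 0" "\<forall>x\<in>{0..L}. Shat x - \<Lambda> \<le> - g0" using fS_neg by blast
  have "integral {0..L} (\<lambda>s. Shat s - \<Lambda>) \<le> integral {0..L} (\<lambda>s. - g0)"
    using g0 by (intro integral_le) (auto intro!: integrable_continuous_interval cfS)
  also have "\<dots> = - g0 * L" using L_pos by simp
  finally have i1: "integral {0..L} (\<lambda>s. Shat s - \<Lambda>) \<le> - g0 * L" .
  have "- g0 * L < 0" using g0 L_pos by simp
  then have "integral {0..L} (\<lambda>s. Shat s - \<Lambda>) < 0" using i1 by linarith
  then have "L * integral {0..L} (\<lambda>s. Shat s - \<Lambda>) < 0" using L_pos by (simp add: mult_pos_neg)
  then show False using sum0 eq by simp
qed

definition "\<tau>1 = Inf Cset"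
definition "\<tau>2 = Sup Cset"

lemma C_sub: "Cset \<subseteq> {0..L}" unfolding Cset_def by auto
lemma C_bdd: "bdd_below Cset" "bdd_above Cset"
proof -
  show "bdd_below Cset" by (rule bdd_below_mono[OF bdd_below_Icc C_sub])
  show "bdd_above Cset" by (rule bdd_above_mono[OF bdd_above_Icc C_sub])
qed

lemma tau_in: "\<tau>1 \<in> Cset" "\<tau>2 \<in> Cset"
  unfolding \<tau>1_def \<tau>2_def using closed_contains_Inf[OF C_ne C_bdd(1) C_closed]
    closed_contains_Sup[OF C_ne C_bdd(2) C_closed] by auto

lemma tau_bounds: "x \<in> Cset \<Longrightarrow> \<tau>1 \<le> x" "x \<in> Cset \<Longrightarrow> x \<le> \<tau>2"
  unfolding \<tau>1_def \<tau>2_def using C_bdd by (auto intro: cInf_lower cSup_upper)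

lemma tau_range: "0 \<le> \<tau>1" "\<tau>1 \<le> \<tau>2" "\<tau>2 \<le> L"
  using tau_in tau_bounds C_sub by force+

lemma lt_left: "x \<in> {0..<\<tau>1} \<Longrightarrow> Shat x < h x"
  using tau_bounds(1)[of x] Shat_le_h[of x] tau_range unfolding Cset_def by force

lemma lt_right: "x \<in> {\<tau>2<..L} \<Longrightarrow> Shat x < h x"
  using tau_bounds(2)[of x] Shat_le_h[of x] tau_range unfolding Cset_def by force

lemma null_left: "emeasure \<mu> {0..<\<tau>1} = 0"
proof (cases "\<tau>1 = 0")
  case True then show ?thesis by simp
next
  case False
  then have t: "\<tau>1 > 0" using tau_range by simp
  define B where "B n = {0..<\<tau>1 - \<tau>1 / real (Suc (Suc n))}" for n
  have eq: "{0..<\<tau>1} = (\<Union>n. B n)"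
  proof
    show "{0..<\<tau>1} \<subseteq> (\<Union>n. B n)"
    proof
      fix x assume x: "x \<in> {0..<\<tau>1}"
      obtain n where n: "\<tau>1 / (\<tau>1 - x) < real n" using reals_Archimedean2 by blast
      have "\<tau>1 / real (Suc (Suc n)) < \<tau>1 - x"
      proof -
        have pos: "\<tau>1 - x > 0" using x by auto
        have "\<tau>1 < real n * (\<tau>1 - x)" using n pos by (simp add: field_simps)
        also have "\<dots> \<le> real (Suc (Suc n)) * (\<tau>1 - x)" using pos by (intro mult_right_mono) auto
        finally show ?thesis by (simp add: field_simps)
      qed
      then have "x \<in> B n" using x unfolding B_def by auto
      then show "x \<in> (\<Union>n. B n)" by blast
    qed
    show "(\<Union>n. B n) \<subseteq> {0..<\<tau>1}"
    proof
      fix x assume "x \<in> (\<Union>n. B n)"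
      then obtain n where "x \<in> B n" by blast
      moreover have "\<tau>1 / real (Suc (Suc n)) > 0" using t by simp
      ultimately show "x \<in> {0..<\<tau>1}" unfolding B_def by auto
    qed
  qed
  have "emeasure \<mu> (\<Union>n. B n) = 0"
  proof (rule emeasure_UN_eq_0)
    fix n
    have d1: "\<tau>1 / real (Suc (Suc n)) \<le> \<tau>1 / 2" using t by (intro divide_left_mono) auto
    have d2: "\<tau>1 / real (Suc (Suc n)) > 0" using t by simp
    have b: "0 < \<tau>1 - \<tau>1 / real (Suc (Suc n))" "\<tau>1 - \<tau>1 / real (Suc (Suc n)) < \<tau>1"
      using t d1 d2 by linarith+
    show "emeasure \<mu> (B n) = 0" unfolding B_def
      by (rule Zleft) (use b tau_range lt_left in auto)
    show "range B \<subseteq> sets \<mu>"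
    proof safe
      fix n
      have "\<tau>1 / real (Suc (Suc n)) > 0" using t by simp
      then show "B n \<in> sets \<mu>" unfolding B_def using tau_range by (intro sets_mu) auto
    qed
  qed
  then show ?thesis using eq by simp
qed

lemma null_right: "emeasure \<mu> {\<tau>2<..L} = 0"
proof (cases "\<tau>2 = L")
  case True then show ?thesis by simp
next
  case False
  then have t: "\<tau>2 < L" using tau_range by simp
  define B where "B n = {\<tau>2 + (L - \<tau>2) / real (Suc (Suc n))<..L}" for n
  have eq: "{\<tau>2<..L} = (\<Union>n. B n)"
  proof
    show "{\<tau>2<..L} \<subseteq> (\<Union>n. B n)"
    proof
      fix x assume x: "x \<in> {\<tau>2<..L}"
      obtain n where n: "(L - \<tau>2) / (x - \<tau>2) < real n" using reals_Archimedean2 by blast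
      have "(L - \<tau>2) / real (Suc (Suc n)) < x - \<tau>2"
      proof -
        have pos: "x - \<tau>2 > 0" using x by auto
        have "L - \<tau>2 < real n * (x - \<tau>2)" using n pos by (simp add: field_simps)
        also have "\<dots> \<le> real (Suc (Suc n)) * (x - \<tau>2)" using pos by (intro mult_right_mono) auto
        finally show ?thesis by (simp add: field_simps)
      qed
      then have "x \<in> B n" using x unfolding B_def by auto
      then show "x \<in> (\<Union>n. B n)" by blast
    qed
    show "(\<Union>n. B n) \<subseteq> {\<tau>2<..L}"
    proof
      fix x assume "x \<in> (\<Union>n. B n)"
      then obtain n where "x \<in> B n" by blast
      moreover have "(L - \<tau>2) / real (Suc (Suc n)) > 0" using t by simp
      ultimately show "x \<in> {\<tau>2<..L}" unfolding B_def by auto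
    qed
  qed
  have "emeasure \<mu> (\<Union>n. B n) = 0"
  proof (rule emeasure_UN_eq_0)
    fix n
    have d1: "(L - \<tau>2) / real (Suc (Suc n)) \<le> (L - \<tau>2) / 2" using t by (intro divide_left_mono) auto
    have d2: "(L - \<tau>2) / real (Suc (Suc n)) > 0" using t by simp
    have d3: "(L - \<tau>2) / 2 < L - \<tau>2" using t by simp
    have b: "\<tau>2 < \<tau>2 + (L - \<tau>2) / real (Suc (Suc n))" "\<tau>2 + (L - \<tau>2) / real (Suc (Suc n)) < L"
      using t d1 d2 d3 by linarith+
    show "emeasure \<mu> (B n) = 0" unfolding B_def
      by (rule Zright) (use b tau_range lt_right in auto)
    show "range B \<subseteq> sets \<mu>"
    proof safe
      fix n
      have "(L - \<tau>2) / real (Suc (Suc n)) > 0" using t by simp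
      then show "B n \<in> sets \<mu>" unfolding B_def using tau_range by (intro sets_mu) auto
    qed
  qed
  then show ?thesis using eq by simp
qed

lemma null_sets_lr: "{0..<\<tau>1} \<in> null_sets \<mu>" "{\<tau>2<..L} \<in> null_sets \<mu>"
  using null_left null_right tau_range by (auto intro!: sets_mu)

lemma N_zero: assumes "x \<in> {0..\<tau>1}" shows "N x = 0"
  unfolding N_def
proof (rule integral_eq_zero_AE, rule AE_I'[OF null_sets_lr(1)])
  show "{s \<in> space \<mu>. \<not> max (x - s) 0 * \<eta> s = 0} \<subseteq> {0..<\<tau>1}"
    using assms space_mu by (auto simp: max_def)
qed

lemma NL_zero: assumes "x \<in> {\<tau>2..L}" shows "NL x = 0"
  unfolding NL_def
proof (rule integral_eq_zero_AE, rule AE_I'[OF null_sets_lr(2)])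
  show "{s \<in> space \<mu>. \<not> max (s - x) 0 * \<eta> s = 0} \<subseteq> {\<tau>2<..L}"
    using assms space_mu by (auto simp: max_def)
qed

lemma N_nonneg: "N x \<ge> 0" "NL x \<ge> 0"
proof -
  have e: "\<And>s. s \<in> space \<mu> \<Longrightarrow> \<eta> s > 0" using coef_pos space_mu by auto
  show "N x \<ge> 0" unfolding N_def
    by (rule integral_nonneg_AE, rule AE_I2) (use e in \<open>force intro: mult_nonneg_nonneg\<close>)
  show "NL x \<ge> 0" unfolding NL_def
    by (rule integral_nonneg_AE, rule AE_I2) (use e in \<open>force intro: mult_nonneg_nonneg\<close>)
qed

end

lemma deriv_quad_left:
  fixes f :: "real \<Rightarrow> real"
  assumes d: "(f has_real_derivative D) (at a within {a..b})" and ab: "a < b"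
    and lb: "\<forall>y\<in>{a..b}. f y \<ge> f a - K * (y - a)^2"
  shows "D \<ge> 0"
proof -
  have e: "at a within {a..b} = at_right a" by (rule at_within_Icc_at_right[OF ab])
  have q: "((\<lambda>y. (f y - f a) / (y - a)) \<longlongrightarrow> D) (at_right a)"
    using d unfolding has_field_derivative_iff e .
  have t: "((\<lambda>y. - K * (y - a)) \<longlongrightarrow> - K * (a - a)) (at_right a)" by (intro tendsto_intros)
  have ev: "\<forall>\<^sub>F y in at_right a. - K * (y - a) \<le> (f y - f a) / (y - a)"
    using eventually_at_right_real[OF ab]
  proof eventually_elim
    case (elim y)
    then have y: "a < y" "y \<le> b" by auto
    have "f a - K * (y - a)^2 \<le> f y" using lb y by auto
    then have "f y - f a \<ge> - K * (y - a)^2" by linarith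
    then have "- K * (y - a)^2 / (y - a) \<le> (f y - f a) / (y - a)" using y by (intro divide_right_mono) auto
    moreover have "- K * (y - a)^2 / (y - a) = - K * (y - a)" using y by (simp add: power2_eq_square)
    ultimately show ?case by simp
  qed
  show ?thesis using tendsto_le[OF _ q t ev] by simp
qed

lemma deriv_quad_right:
  fixes f :: "real \<Rightarrow> real"
  assumes d: "(f has_real_derivative D) (at b within {a..b})" and ab: "a < b"
    and lb: "\<forall>y\<in>{a..b}. f y \<ge> f b - K * (b - y)^2"
  shows "D \<le> 0"
proof -
  have e: "at b within {a..b} = at_left b" by (rule at_within_Icc_at_left[OF ab])
  have q: "((\<lambda>y. (f y - f b) / (y - b)) \<longlongrightarrow> D) (at_left b)"
    using d unfolding has_field_derivative_iff e .
  have t: "((\<lambda>y. K * (b - y)) \<longlongrightarrow> K * (b - b)) (at_left b)" by (intro tendsto_intros)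
  have ev: "\<forall>\<^sub>F y in at_left b. (f y - f b) / (y - b) \<le> K * (b - y)"
    using eventually_at_left_real[OF ab]
  proof eventually_elim
    case (elim y)
    then have y: "a \<le> y" "y < b" by auto
    have "f b - K * (b - y)^2 \<le> f y" using lb y by auto
    then have "f b - f y \<le> K * (b - y)^2" by linarith
    then have "(f b - f y) / (b - y) \<le> K * (b - y)^2 / (b - y)" using y by (intro divide_right_mono) auto
    moreover have "K * (b - y)^2 / (b - y) = K * (b - y)" using y by (simp add: power2_eq_square)
    moreover have "(f y - f b) / (y - b) = (f b - f y) / (b - y)" using minus_divide_divide[of "f b - f y" "b - y"] by simp
    ultimately show ?case by simp
  qed
  show ?thesis using tendsto_le[OF _ t q ev] by simp
qed

lemma pos_deriv_left_pt:
  fixes f :: "real \<Rightarrow> real"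
  assumes d: "(f has_real_derivative D) (at b within {a..b})" and ab: "a < b" and D: "D > 0"
  shows "\<exists>y\<in>{a..<b}. f y < f b"
proof -
  have e: "at b within {a..b} = at_left b" by (rule at_within_Icc_at_left[OF ab])
  have q: "((\<lambda>y. (f y - f b) / (y - b)) \<longlongrightarrow> D) (at_left b)"
    using d unfolding has_field_derivative_iff e .
  have "\<forall>\<^sub>F y in at_left b. 0 < (f y - f b) / (y - b)" using order_tendstoD(1)[OF q D] .
  then have "\<forall>\<^sub>F y in at_left b. 0 < (f y - f b) / (y - b) \<and> y \<in> {a<..<b}"
    using eventually_at_left_real[OF ab] by (rule eventually_conj)
  then obtain y where y: "0 < (f y - f b) / (y - b)" "y \<in> {a<..<b}"
    using eventually_happens'[OF trivial_limit_at_left_real] by blast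
  then have "f y - f b < 0" by (auto simp: zero_less_divide_iff)
  then show ?thesis using y by force
qed

lemma neg_deriv_right_pt:
  fixes f :: "real \<Rightarrow> real"
  assumes d: "(f has_real_derivative D) (at a within {a..b})" and ab: "a < b" and D: "D < 0"
  shows "\<exists>y\<in>{a<..b}. f y < f a"
proof -
  have e: "at a within {a..b} = at_right a" by (rule at_within_Icc_at_right[OF ab])
  have q: "((\<lambda>y. (f y - f a) / (y - a)) \<longlongrightarrow> D) (at_right a)"
    using d unfolding has_field_derivative_iff e .
  have "\<forall>\<^sub>F y in at_right a. (f y - f a) / (y - a) < 0" using order_tendstoD(2)[OF q D] .
  then have "\<forall>\<^sub>F y in at_right a. (f y - f a) / (y - a) < 0 \<and> y \<in> {a<..<b}"
    using eventually_at_right_real[OF ab] by (rule eventually_conj)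
  then obtain y where y: "(f y - f a) / (y - a) < 0" "y \<in> {a<..<b}"
    using eventually_happens'[OF trivial_limit_at_right_real] by blast
  then have "f y - f a < 0" by (auto simp: divide_less_0_iff)
  then show ?thesis using y by force
qed

lemma Phi_int:
  fixes f :: "real \<Rightarrow> real"
  assumes f: "continuous_on {0..L} f" and x: "0 \<le> x" "x \<le> L"
  shows "Phi L f x = integral {0..x} (\<lambda>s. (x - s) * f s)"
proof -
  let ?g = "\<lambda>s. max (x - s) 0 * f s"
  have gi: "?g integrable_on {0..L}"
    by (rule integrable_continuous_interval) (auto intro!: continuous_intros f)
  have "integral {0..x} ?g + integral {x..L} ?g = integral {0..L} ?g"
    by (rule Henstock_Kurzweil_Integration.integral_combine) (use x gi in auto)
  moreover have "integral {x..L} ?g = 0"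
    by (subst integral_cong[where g="\<lambda>_. 0"]) auto
  moreover have "integral {0..x} ?g = integral {0..x} (\<lambda>s. (x - s) * f s)"
    by (rule integral_cong) auto
  ultimately show ?thesis unfolding Phi_def by simp
qed

lemma Psi_int:
  fixes f :: "real \<Rightarrow> real"
  assumes f: "continuous_on {0..L} f" and x: "0 \<le> x" "x \<le> L"
  shows "Psi L f x = integral {x..L} (\<lambda>s. (s - x) * f s)"
proof -
  let ?g = "\<lambda>s. max (s - x) 0 * f s"
  have gi: "?g integrable_on {0..L}"
    by (rule integrable_continuous_interval) (auto intro!: continuous_intros f)
  have "integral {0..x} ?g + integral {x..L} ?g = integral {0..L} ?g"
    by (rule Henstock_Kurzweil_Integration.integral_combine) (use x gi in auto)
  moreover have "integral {0..x} ?g = 0"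
    by (subst integral_cong[where g="\<lambda>_. 0"]) auto
  moreover have "integral {x..L} ?g = integral {x..L} (\<lambda>s. (s - x) * f s)"
    by (rule integral_cong) auto
  ultimately show ?thesis unfolding Psi_def by simp
qed

lemma int_abs_bound:
  fixes g :: "real \<Rightarrow> real"
  assumes "a \<le> b" "continuous_on {a..b} g" "\<forall>s\<in>{a..b}. \<bar>g s\<bar> \<le> B" "0 \<le> B"
  shows "\<bar>integral {a..b} g\<bar> \<le> B * (b - a)"
proof -
  have "(g has_integral integral {a..b} g) (cbox a b)"
    using integrable_continuous_interval[OF assms(2)] by (simp add: has_integral_integral)
  from has_integral_bound[OF assms(4) this] assms show ?thesis by auto
qed

context setting2
begin

lemma Mf: obtains M where "M > 0" "\<forall>x\<in>{0..L}. \<bar>Shat x - \<Lambda>\<bar> \<le> M"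
  using bdd_upper[OF cfS] by blast

lemma lower_left: assumes x: "x \<in> {0..L}" shows "\<exists>M. \<forall>x\<in>{0..L}. dS * Shat x \<ge> dS * Shat 0 - M * x^2"
proof -
  obtain M where M: "M > 0" "\<forall>x\<in>{0..L}. \<bar>Shat x - \<Lambda>\<bar> \<le> M" using Mf by blast
  have "dS * Shat y \<ge> dS * Shat 0 - M * y^2" if y: "y \<in> {0..L}" for y
  proof -
    have "\<bar>integral {0..y} (\<lambda>s. (y - s) * (Shat s - \<Lambda>))\<bar> \<le> (y * M) * (y - 0)"
    proof (rule int_abs_bound)
      show "continuous_on {0..y} (\<lambda>s. (y - s) * (Shat s - \<Lambda>))"
        using y by (intro continuous_intros continuous_on_subset[OF cont_Shat]) auto
      show "\<forall>s\<in>{0..y}. \<bar>(y - s) * (Shat s - \<Lambda>)\<bar> \<le> y * M"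
      proof
        fix s assume s: "s \<in> {0..y}"
        then have "\<bar>Shat s - \<Lambda>\<bar> \<le> M" using M y by auto
        moreover have "\<bar>y - s\<bar> \<le> y" using s by auto
        ultimately show "\<bar>(y - s) * (Shat s - \<Lambda>)\<bar> \<le> y * M"
          unfolding abs_mult by (intro mult_mono) auto
      qed
    qed (use y M in auto)
    then have "Phi L (\<lambda>s. Shat s - \<Lambda>) y \<ge> - (M * y^2)"
      using Phi_int[OF cfS, of y] y by (simp add: power2_eq_square abs_le_iff algebra_simps)
    then show ?thesis using PP(1)[OF y] N_nonneg(1)[of y] by linarith
  qed
  then show ?thesis by blast
qed

lemma lower_right: "\<exists>M. \<forall>x\<in>{0..L}. dS * Shat x \<ge> dS * Shat L - M * (L - x)^2"
proof -
  obtain M where M: "M > 0" "\<forall>x\<in>{0..L}. \<bar>Shat x - \<Lambda>\<bar> \<le> M" using Mf by blast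
  have "dS * Shat y \<ge> dS * Shat L - M * (L - y)^2" if y: "y \<in> {0..L}" for y
  proof -
    have "\<bar>integral {y..L} (\<lambda>s. (s - y) * (Shat s - \<Lambda>))\<bar> \<le> ((L - y) * M) * (L - y)"
    proof (rule int_abs_bound)
      show "continuous_on {y..L} (\<lambda>s. (s - y) * (Shat s - \<Lambda>))"
        using y by (intro continuous_intros continuous_on_subset[OF cont_Shat]) auto
      show "\<forall>s\<in>{y..L}. \<bar>(s - y) * (Shat s - \<Lambda>)\<bar> \<le> (L - y) * M"
      proof
        fix s assume s: "s \<in> {y..L}"
        then have "\<bar>Shat s - \<Lambda>\<bar> \<le> M" using M y by auto
        moreover have "\<bar>s - y\<bar> \<le> L - y" using s by auto
        ultimately show "\<bar>(s - y) * (Shat s - \<Lambda>)\<bar> \<le> (L - y) * M"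
          unfolding abs_mult by (intro mult_mono) auto
      qed
    qed (use y M in auto)
    then have "Psi L (\<lambda>s. Shat s - \<Lambda>) y \<ge> - (M * (L - y)^2)"
      using Psi_int[OF cfS, of y] y by (simp add: power2_eq_square abs_le_iff algebra_simps)
    then show ?thesis using PP(2)[OF y] N_nonneg(2)[of y] by linarith
  qed
  then show ?thesis by blast
qed

lemma tau1_pos: "\<tau>1 > 0"
proof (rule ccontr)
  assume "\<not> \<tau>1 > 0"
  then have "\<tau>1 = 0" using tau_range by simp
  then have e0: "Shat 0 = h 0" using tau_in(1) unfolding Cset_def by auto
  obtain M where M: "\<forall>x\<in>{0..L}. dS * Shat x \<ge> dS * Shat 0 - M * x^2"
    using lower_left[of 0] L_pos by auto
  have lb: "\<forall>y\<in>{0..L}. h y \<ge> h 0 - (M / dS) * (y - 0)^2"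
  proof
    fix y assume y: "y \<in> {0..L}"
    have "dS * Shat y \<ge> dS * Shat 0 - M * y^2" using M y by auto
    then have "Shat y \<ge> Shat 0 - (M / dS) * y^2" using dS_pos by (simp add: field_simps)
    then show "h y \<ge> h 0 - (M / dS) * (y - 0)^2" using Shat_le_h[OF y] e0 by simp
  qed
  have hd: "(h has_real_derivative h1 0) (at 0 within {0..L})" using h_C2 L_pos unfolding C2_with_def by auto
  have "h1 0 \<ge> 0" by (rule deriv_quad_left[OF hd L_pos lb])
  then show False using h1_0 by simp
qed

lemma tau2_lt: "\<tau>2 < L"
proof (rule ccontr)
  assume "\<not> \<tau>2 < L"
  then have "\<tau>2 = L" using tau_range by simp
  then have e0: "Shat L = h L" using tau_in(2) unfolding Cset_def by auto
  obtain M where M: "\<forall>x\<in>{0..L}. dS * Shat x \<ge> dS * Shat L - M * (L - x)^2"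
    using lower_right by auto
  have lb: "\<forall>y\<in>{0..L}. h y \<ge> h L - (M / dS) * (L - y)^2"
  proof
    fix y assume y: "y \<in> {0..L}"
    have "dS * Shat y \<ge> dS * Shat L - M * (L - y)^2" using M y by auto
    then have "Shat y \<ge> Shat L - (M / dS) * (L - y)^2" using dS_pos by (simp add: field_simps)
    then show "h y \<ge> h L - (M / dS) * (L - y)^2" using Shat_le_h[OF y] e0 by simp
  qed
  have hd: "(h has_real_derivative h1 L) (at L within {0..L})" using h_C2 L_pos unfolding C2_with_def by auto
  have "h1 L \<le> 0" by (rule deriv_quad_right[OF hd L_pos lb])
  then show False using h1_L by simp
qed

lemma left_formula: "x \<in> {0..\<tau>1} \<Longrightarrow> Shat x = Shat 0 + Phi L (\<lambda>s. Shat s - \<Lambda>) x / dS"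
  using PP(1)[of x] N_zero[of x] tau_range dS_pos by (auto simp: field_simps)

lemma right_formula: "x \<in> {\<tau>2..L} \<Longrightarrow> Shat x = Shat L + Psi L (\<lambda>s. Shat s - \<Lambda>) x / dS"
  using PP(2)[of x] NL_zero[of x] tau_range dS_pos by (auto simp: field_simps)

lemma left_fun_deriv: "x \<in> {0..L} \<Longrightarrow>
  ((\<lambda>y. Shat 0 + Phi L (\<lambda>s. Shat s - \<Lambda>) y / dS) has_real_derivative G x / dS) (at x within {0..L})"
proof -
  assume x: "x \<in> {0..L}"
  have "((\<lambda>y. Shat 0 + Phi L (\<lambda>s. Shat s - \<Lambda>) y / dS) has_real_derivative 0 + G x / dS) (at x within {0..L})"
    unfolding G_def by (intro DERIV_add DERIV_const DERIV_cdivide Phi_deriv[OF cfS x])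
  then show ?thesis by simp
qed

lemma right_fun_deriv: "x \<in> {0..L} \<Longrightarrow>
  ((\<lambda>y. Shat L + Psi L (\<lambda>s. Shat s - \<Lambda>) y / dS) has_real_derivative (G x - G L) / dS) (at x within {0..L})"
proof -
  assume x: "x \<in> {0..L}"
  have "((\<lambda>y. Shat L + Psi L (\<lambda>s. Shat s - \<Lambda>) y / dS) has_real_derivative 0 + (G x - G L) / dS) (at x within {0..L})"
    unfolding G_def by (intro DERIV_add DERIV_const DERIV_cdivide Psi_deriv[OF cfS x])
  then show ?thesis by simp
qed

lemma Shat_left_within: assumes x: "x \<in> {0..\<tau>1}"
  shows "(Shat has_real_derivative G x / dS) (at x within {0..\<tau>1})"
proof -
  have s: "{0..\<tau>1} \<subseteq> {0..L}" using tau_range by auto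
  have "((\<lambda>y. Shat 0 + Phi L (\<lambda>s. Shat s - \<Lambda>) y / dS) has_real_derivative G x / dS) (at x within {0..\<tau>1})"
    using left_fun_deriv[of x] x s by (auto intro: DERIV_subset)
  then show ?thesis
  proof (rule has_field_derivative_transform_within[where d=1])
    show "x \<in> {0..\<tau>1}" by (rule x)
    fix y assume "y \<in> {0..\<tau>1}"
    from left_formula[OF this] show "Shat 0 + Phi L (\<lambda>s. Shat s - \<Lambda>) y / dS = Shat y" by (rule sym)
  qed simp
qed

lemma Shat_left_L: assumes x: "x \<in> {0..<\<tau>1}"
  shows "(Shat has_real_derivative G x / dS) (at x within {0..L})"
proof -
  have xL: "x \<in> {0..L}" using x tau_range by auto
  show ?thesis
  proof (rule has_field_derivative_transform_within[OF left_fun_deriv[OF xL], where d="\<tau>1 - x"])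
    show "0 < \<tau>1 - x" using x by auto
    show "x \<in> {0..L}" by fact
    fix y assume "y \<in> {0..L}" "dist y x < \<tau>1 - x"
    then have "y \<in> {0..\<tau>1}" by (auto simp: dist_real_def)
    from left_formula[OF this] show "Shat 0 + Phi L (\<lambda>s. Shat s - \<Lambda>) y / dS = Shat y" by (rule sym)
  qed
qed

lemma Shat_right_within: assumes x: "x \<in> {\<tau>2..L}"
  shows "(Shat has_real_derivative (G x - G L) / dS) (at x within {\<tau>2..L})"
proof -
  have s: "{\<tau>2..L} \<subseteq> {0..L}" using tau_range by auto
  have "((\<lambda>y. Shat L + Psi L (\<lambda>s. Shat s - \<Lambda>) y / dS) has_real_derivative (G x - G L) / dS) (at x within {\<tau>2..L})"
    using right_fun_deriv[of x] x s by (auto intro: DERIV_subset)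
  then show ?thesis
  proof (rule has_field_derivative_transform_within[where d=1])
    show "x \<in> {\<tau>2..L}" by (rule x)
    fix y assume "y \<in> {\<tau>2..L}"
    from right_formula[OF this] show "Shat L + Psi L (\<lambda>s. Shat s - \<Lambda>) y / dS = Shat y" by (rule sym)
  qed simp
qed

lemma Shat_right_L: assumes x: "x \<in> {\<tau>2<..L}"
  shows "(Shat has_real_derivative (G x - G L) / dS) (at x within {0..L})"
proof -
  have xL: "x \<in> {0..L}" using x tau_range by auto
  show ?thesis
  proof (rule has_field_derivative_transform_within[OF right_fun_deriv[OF xL], where d="x - \<tau>2"])
    show "0 < x - \<tau>2" using x by auto
    show "x \<in> {0..L}" by fact
    fix y assume "y \<in> {0..L}" "dist y x < x - \<tau>2"
    then have "y \<in> {\<tau>2..L}" by (auto simp: dist_real_def)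
    from right_formula[OF this] show "Shat L + Psi L (\<lambda>s. Shat s - \<Lambda>) y / dS = Shat y" by (rule sym)
  qed
qed

end

lemma exhaust_open:
  fixes p q :: real
  assumes pq: "p < q"
  shows "{p<..<q} = (\<Union>n. {p + (q - p) / real (n + 3)<..<q - (q - p) / real (n + 3)})"
proof
  show "{p<..<q} \<subseteq> (\<Union>n. {p + (q - p) / real (n + 3)<..<q - (q - p) / real (n + 3)})"
  proof
    fix y assume y: "y \<in> {p<..<q}"
    define m where "m = min (y - p) (q - y)"
    have m: "m > 0" "m \<le> y - p" "m \<le> q - y" unfolding m_def using y by auto
    obtain n where n: "(q - p) / m < real n" using reals_Archimedean2 by blast
    have "(q - p) / real (n + 3) < m"
    proof -
      have "q - p < real n * m" using n m by (simp add: field_simps)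
      also have "\<dots> \<le> real (n + 3) * m" using m by (intro mult_right_mono) auto
      finally show ?thesis by (simp add: field_simps)
    qed
    then have "y \<in> {p + (q - p) / real (n + 3)<..<q - (q - p) / real (n + 3)}" using m by auto
    then show "y \<in> (\<Union>n. {p + (q - p) / real (n + 3)<..<q - (q - p) / real (n + 3)})" by blast
  qed
  show "(\<Union>n. {p + (q - p) / real (n + 3)<..<q - (q - p) / real (n + 3)}) \<subseteq> {p<..<q}"
  proof
    fix y assume "y \<in> (\<Union>n. {p + (q - p) / real (n + 3)<..<q - (q - p) / real (n + 3)})"
    then obtain n where "y \<in> {p + (q - p) / real (n + 3)<..<q - (q - p) / real (n + 3)}" by blast
    moreover have "(q - p) / real (n + 3) > 0" using pq by simp
    ultimately show "y \<in> {p<..<q}" by auto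
  qed
qed

context setting2
begin

lemma h_within: assumes "x \<in> {0..L}" "T \<subseteq> {0..L}"
  shows "(h has_real_derivative h1 x) (at x within T)"
proof -
  have "(h has_real_derivative h1 x) (at x within {0..L})" using h_C2 assms(1) unfolding C2_with_def by auto
  then show ?thesis by (rule DERIV_subset) (rule assms(2))
qed

lemma tau1_lt_rho1: "\<tau>1 < \<rho>1"
proof (rule ccontr)
  assume "\<not> \<tau>1 < \<rho>1"
  then have le: "\<rho>1 \<le> \<tau>1" by simp
  have t1: "\<tau>1 > 0" by (rule tau1_pos)
  have tin: "Shat \<tau>1 = h \<tau>1" "\<tau>1 \<in> {0..L}" using tau_in(1) unfolding Cset_def by auto
  consider "\<rho>1 < \<tau>1" | "\<rho>1 = \<tau>1" using le by linarith
  then show False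
  proof cases
    case 1
    have "Shat \<tau>1 < Shat \<rho>1"
    proof (rule DERIV_neg_imp_decreasing_open[OF 1])
      fix z assume z: "\<rho>1 < z" "z < \<tau>1"
      then have z0: "z \<in> {0..<\<tau>1}" "z \<in> {0<..<L}" using rho tau_range by auto
      have "(Shat has_real_derivative G z / dS) (at z)"
        using Shat_left_L[OF z0(1)] at_within_interior[OF interior_Icc'[OF z0(2)]] by simp
      moreover have "G z < 0" using G_strict[of 0 z] G0 z0 by auto
      ultimately show "\<exists>y. (Shat has_real_derivative y) (at z) \<and> y < 0"
        using dS_pos by (intro exI[of _ "G z / dS"]) (simp add: divide_neg_pos)
    next
      show "continuous_on {\<rho>1..\<tau>1} Shat" by (rule continuous_on_subset[OF cont_Shat]) (use rho tau_range in auto)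
    qed
    moreover have "h \<tau>1 \<ge> hmin" using h_ge_min tin by auto
    moreover have "Shat \<rho>1 \<le> h \<rho>1" using Shat_le_h rho_in by auto
    ultimately show False using tin h_rho by linarith
  next
    case 2
    have s: "{0..\<tau>1} \<subseteq> {0..L}" using tau_range by auto
    have hd: "(h has_real_derivative h1 \<tau>1) (at \<tau>1 within {0..\<tau>1})"
      by (rule h_within[OF tin(2) s])
    have "((\<lambda>y. h y - Shat y) has_real_derivative h1 \<tau>1 - G \<tau>1 / dS) (at \<tau>1 within {0..\<tau>1})"
      by (intro DERIV_diff hd Shat_left_within) (use t1 in auto)
    moreover have "h1 \<tau>1 = 0" using h1_zero 2 rho by auto
    moreover have "G \<tau>1 < 0" using G_strict[of 0 \<tau>1] G0 t1 tau_range by auto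
    ultimately have d: "((\<lambda>y. h y - Shat y) has_real_derivative - G \<tau>1 / dS) (at \<tau>1 within {0..\<tau>1})"
      and pos: "- G \<tau>1 / dS > 0" using dS_pos by (auto simp: divide_neg_pos)
    obtain y where y: "y \<in> {0..<\<tau>1}" "h y - Shat y < h \<tau>1 - Shat \<tau>1"
      using pos_deriv_left_pt[OF d t1 pos] by blast
    then have "y \<in> {0..L}" using tau_range by auto
    then have "Shat y \<le> h y" by (rule Shat_le_h)
    then show False using y tin by linarith
  qed
qed

lemma tau2_gt_rho2: "\<rho>2 < \<tau>2"
proof (rule ccontr)
  assume "\<not> \<rho>2 < \<tau>2"
  then have le: "\<tau>2 \<le> \<rho>2" by simp
  have t2: "\<tau>2 < L" by (rule tau2_lt)
  have tin: "Shat \<tau>2 = h \<tau>2" "\<tau>2 \<in> {0..L}" using tau_in(2) unfolding Cset_def by auto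
  consider "\<tau>2 < \<rho>2" | "\<rho>2 = \<tau>2" using le by linarith
  then show False
  proof cases
    case 1
    have "Shat \<tau>2 < Shat \<rho>2"
    proof (rule DERIV_pos_imp_increasing_open[OF 1])
      fix z assume z: "\<tau>2 < z" "z < \<rho>2"
      then have z0: "z \<in> {\<tau>2<..L}" "z \<in> {0<..<L}" using rho tau_range by auto
      have "(Shat has_real_derivative (G z - G L) / dS) (at z)"
        using Shat_right_L[OF z0(1)] at_within_interior[OF interior_Icc'[OF z0(2)]] by simp
      moreover have "G L < G z" using G_strict[of z L] z0 by auto
      ultimately show "\<exists>y. (Shat has_real_derivative y) (at z) \<and> 0 < y"
        using dS_pos by (intro exI[of _ "(G z - G L) / dS"]) simp
    next
      show "continuous_on {\<tau>2..\<rho>2} Shat" by (rule continuous_on_subset[OF cont_Shat]) (use rho tau_range in auto)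
    qed
    moreover have "h \<tau>2 \<ge> hmin" using h_ge_min tin by auto
    moreover have "Shat \<rho>2 \<le> h \<rho>2" using Shat_le_h rho_in by auto
    ultimately show False using tin h_rho by linarith
  next
    case 2
    have s: "{\<tau>2..L} \<subseteq> {0..L}" using tau_range by auto
    have hd: "(h has_real_derivative h1 \<tau>2) (at \<tau>2 within {\<tau>2..L})"
      by (rule h_within[OF tin(2) s])
    have "((\<lambda>y. h y - Shat y) has_real_derivative h1 \<tau>2 - (G \<tau>2 - G L) / dS) (at \<tau>2 within {\<tau>2..L})"
      by (intro DERIV_diff hd Shat_right_within) (use t2 in auto)
    moreover have "h1 \<tau>2 = 0" using h1_zero 2 rho by auto
    moreover have "G L < G \<tau>2" using G_strict[of \<tau>2 L] t2 tau_range by auto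
    ultimately have d: "((\<lambda>y. h y - Shat y) has_real_derivative - ((G \<tau>2 - G L) / dS)) (at \<tau>2 within {\<tau>2..L})"
      and neg: "- ((G \<tau>2 - G L) / dS) < 0" using dS_pos by auto
    obtain y where y: "y \<in> {\<tau>2<..L}" "h y - Shat y < h \<tau>2 - Shat \<tau>2"
      using neg_deriv_right_pt[OF d t2 neg] by blast
    then have "y \<in> {0..L}" using tau_range by auto
    then have "Shat y \<le> h y" by (rule Shat_le_h)
    then show False using y tin by linarith
  qed
qed

lemma int_ind_cont:
  fixes g :: "real \<Rightarrow> real"
  assumes "A \<in> sets \<mu>" "continuous_on {0..L} g"
  shows "integrable \<mu> (\<lambda>s. g s * indicator A s)"
  by (rule integrable_real_mult_indicator[OF assms(1) int_cont[OF assms(2)]])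

lemma N_affine:
  assumes pq: "0 \<le> p" "p < q" "q \<le> L" and null: "emeasure \<mu> {p<..<q} = 0" and y: "y \<in> {p..q}"
  shows "N y = y * integral\<^sup>L \<mu> (\<lambda>s. \<eta> s * indicator {0..p} s)
             - integral\<^sup>L \<mu> (\<lambda>s. (s * \<eta> s) * indicator {0..p} s)"
proof -
  have sp: "{0..p} \<in> sets \<mu>" using pq by (intro sets_mu) auto
  have nullset: "{p<..<q} \<in> null_sets \<mu>" using null pq by (auto intro!: sets_mu)
  have ce: "continuous_on {0..L} \<eta>" by (rule cont_coef(3))
  have i1: "integrable \<mu> (\<lambda>s. (y * \<eta> s) * indicator {0..p} s)"
    by (rule int_ind_cont[OF sp]) (intro continuous_intros ce)
  have i2: "integrable \<mu> (\<lambda>s. (s * \<eta> s) * indicator {0..p} s)"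
    by (rule int_ind_cont[OF sp]) (intro continuous_intros ce)
  have "N y = integral\<^sup>L \<mu> (\<lambda>s. (y * \<eta> s) * indicator {0..p} s - (s * \<eta> s) * indicator {0..p} s)"
    unfolding N_def
  proof (rule integral_cong_AE)
    show "(\<lambda>s. max (y - s) 0 * \<eta> s) \<in> borel_measurable \<mu>"
      by (rule meas_cont) (intro continuous_intros ce)
    show "(\<lambda>s. (y * \<eta> s) * indicator {0..p} s - (s * \<eta> s) * indicator {0..p} s) \<in> borel_measurable \<mu>"
      using i1 i2 by auto
    show "AE s in \<mu>. max (y - s) 0 * \<eta> s = (y * \<eta> s) * indicator {0..p} s - (s * \<eta> s) * indicator {0..p} s"
    proof (rule AE_I'[OF nullset])
      show "{s \<in> space \<mu>. \<not> max (y - s) 0 * \<eta> s = (y * \<eta> s) * indicator {0..p} s - (s * \<eta> s) * indicator {0..p} s}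
            \<subseteq> {p<..<q}"
      proof
        fix s assume s: "s \<in> {s \<in> space \<mu>. \<not> max (y - s) 0 * \<eta> s = (y * \<eta> s) * indicator {0..p} s - (s * \<eta> s) * indicator {0..p} s}"
        then have s0: "s \<in> {0..L}" using space_mu by auto
        show "s \<in> {p<..<q}"
        proof (rule ccontr)
          assume "s \<notin> {p<..<q}"
          then consider "s \<le> p" | "q \<le> s" by auto
          then have "max (y - s) 0 * \<eta> s = (y * \<eta> s) * indicator {0..p} s - (s * \<eta> s) * indicator {0..p} s"
          proof cases
            case 1 then show ?thesis using y s0 by (auto simp: max_def algebra_simps indicator_def)
          next
            case 2 then show ?thesis using y s0 pq by (auto simp: max_def indicator_def)
          qed
          then show False using s by auto
        qed
      qed
    qed
  qed
  also have "\<dots> = integral\<^sup>L \<mu> (\<lambda>s. (y * \<eta> s) * indicator {0..p} s) - integral\<^sup>L \<mu> (\<lambda>s. (s * \<eta> s) * indicator {0..p} s)"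
    by (rule Bochner_Integration.integral_diff[OF i1 i2])
  also have "integral\<^sup>L \<mu> (\<lambda>s. (y * \<eta> s) * indicator {0..p} s) = y * integral\<^sup>L \<mu> (\<lambda>s. \<eta> s * indicator {0..p} s)"
    by (simp add: mult.assoc)
  finally show ?thesis .
qed

lemma contact_all: assumes x: "x \<in> {\<tau>1..\<tau>2}" shows "Shat x = h x"
proof (rule ccontr)
  assume ne: "Shat x \<noteq> h x"
  have xL: "x \<in> {0..L}" using x tau_range by auto
  have lt: "Shat x < h x" using ne Shat_le_h[OF xL] by simp
  have xC: "x \<notin> Cset" using ne unfolding Cset_def by auto
  have xo: "\<tau>1 < x" "x < \<tau>2" using x xC tau_in by (auto simp: less_le)
  define P where "P = Cset \<inter> {..x}"
  define Q where "Q = Cset \<inter> {x..}"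
  have Pne: "P \<noteq> {}" "\<tau>1 \<in> P" unfolding P_def using tau_in xo by auto
  have Qne: "Q \<noteq> {}" "\<tau>2 \<in> Q" unfolding Q_def using tau_in xo by auto
  have Pcl: "closed P" unfolding P_def by (intro closed_Int C_closed closed_atMost)
  have Qcl: "closed Q" unfolding Q_def by (intro closed_Int C_closed closed_atLeast)
  have Pb: "bdd_above P" unfolding P_def by auto
  have Qb: "bdd_below Q" unfolding Q_def by auto
  define p where "p = Sup P"
  define q where "q = Inf Q"
  have pP: "p \<in> P" unfolding p_def by (rule closed_contains_Sup[OF Pne(1) Pb Pcl])
  have qQ: "q \<in> Q" unfolding q_def by (rule closed_contains_Inf[OF Qne(1) Qb Qcl])
  have pC: "p \<in> Cset" "p \<le> x" using pP unfolding P_def by auto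
  have qC: "q \<in> Cset" "x \<le> q" using qQ unfolding Q_def by auto
  have px: "p < x" using pC xC by (auto simp: less_le)
  have xq: "x < q" using qC xC by (auto simp: less_le)
  have tp: "\<tau>1 \<le> p" unfolding p_def using Pne Pb by (auto intro: cSup_upper)
  have qt: "q \<le> \<tau>2" unfolding q_def using Qne Qb by (auto intro: cInf_lower)
  have p0: "0 < p" using tp tau1_pos by simp
  have qL: "q < L" using qt tau2_lt by simp
  have gap: "\<And>y. y \<in> {p<..<q} \<Longrightarrow> y \<notin> Cset"
  proof
    fix y assume y: "y \<in> {p<..<q}" and yC: "y \<in> Cset"
    show False
    proof (cases "y \<le> x")
      case True
      then have "y \<in> P" using yC unfolding P_def by auto
      then have "y \<le> p" unfolding p_def using Pb by (auto intro: cSup_upper)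
      then show False using y by auto
    next
      case False
      then have "y \<in> Q" using yC unfolding Q_def by auto
      then have "q \<le> y" unfolding q_def using Qb by (auto intro: cInf_lower)
      then show False using y by auto
    qed
  qed
  have ltpq: "\<And>y. y \<in> {p<..<q} \<Longrightarrow> Shat y < h y"
  proof -
    fix y assume y: "y \<in> {p<..<q}"
    then have yL: "y \<in> {0..L}" using p0 qL by auto
    then show "Shat y < h y" using gap[OF y] Shat_le_h[OF yL] unfolding Cset_def by force
  qed
  have pq: "p < q" using px xq by simp
  have null: "emeasure \<mu> {p<..<q} = 0"
  proof -
    have "emeasure \<mu> (\<Union>n. {p + (q - p) / real (n + 3)<..<q - (q - p) / real (n + 3)}) = 0"
    proof (rule emeasure_UN_eq_0)
      fix n
      define d where "d = (q - p) / real (n + 3)"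
      have d2: "d > 0" unfolding d_def using pq by simp
      have "d * 3 \<le> d * real (n + 3)" using d2 by (intro mult_left_mono) auto
      moreover have "d * real (n + 3) = q - p" unfolding d_def by simp
      ultimately have d3: "d * 3 \<le> q - p" by simp
      have ab: "p < p + d" "p + d < q - d" "q - d < q" using d2 d3 pq by linarith+
      then have ab: "p < p + (q - p) / real (n + 3)" "p + (q - p) / real (n + 3) < q - (q - p) / real (n + 3)"
        "q - (q - p) / real (n + 3) < q" unfolding d_def by auto
      show "emeasure \<mu> {p + (q - p) / real (n + 3)<..<q - (q - p) / real (n + 3)} = 0"
        by (rule Zmid) (use ab p0 qL ltpq in auto)
      show "range (\<lambda>n. {p + (q - p) / real (n + 3)<..<q - (q - p) / real (n + 3)}) \<subseteq> sets \<mu>"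
      proof safe
        fix n
        have "(q - p) / real (n + 3) > 0" using pq by simp
        then show "{p + (q - p) / real (n + 3)<..<q - (q - p) / real (n + 3)} \<in> sets \<mu>"
          using p0 qL by (intro sets_mu) auto
      qed
    qed
    then show ?thesis using exhaust_open[OF pq] by simp
  qed
  define A where "A = integral\<^sup>L \<mu> (\<lambda>s. \<eta> s * indicator {0..p} s)"
  define B where "B = integral\<^sup>L \<mu> (\<lambda>s. (s * \<eta> s) * indicator {0..p} s)"
  have form: "\<And>y. y \<in> {p..q} \<Longrightarrow> Shat y = Shat 0 + (Phi L (\<lambda>s. Shat s - \<Lambda>) y + y * A - B) / dS"
  proof -
    fix y assume y: "y \<in> {p..q}"
    then have yL: "y \<in> {0..L}" using p0 qL by auto
    have "N y = y * A - B" unfolding A_def B_def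
      by (rule N_affine[OF _ pq _ null y]) (use p0 qL in auto)
    then show "Shat y = Shat 0 + (Phi L (\<lambda>s. Shat s - \<Lambda>) y + y * A - B) / dS"
      using PP(1)[OF yL] dS_pos by (simp add: field_simps)
  qed
  have dS': "\<And>z. z \<in> {p<..<q} \<Longrightarrow> (Shat has_real_derivative (G z + A) / dS) (at z)"
  proof -
    fix z assume z: "z \<in> {p<..<q}"
    then have zL: "z \<in> {0..L}" and zi: "z \<in> {0<..<L}" using p0 qL by auto
    have "((\<lambda>y. Shat 0 + (Phi L (\<lambda>s. Shat s - \<Lambda>) y + y * A - B) / dS) has_real_derivative
          0 + (G z + 1 * A - 0) / dS) (at z within {0..L})"
      unfolding G_def
      by (intro DERIV_add DERIV_const DERIV_cdivide DERIV_diff DERIV_cmult_right DERIV_ident Phi_deriv[OF cfS zL])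
    then have "((\<lambda>y. Shat 0 + (Phi L (\<lambda>s. Shat s - \<Lambda>) y + y * A - B) / dS) has_real_derivative
          (G z + A) / dS) (at z)"
      using at_within_interior[OF interior_Icc'[OF zi]] by simp
    then show "(Shat has_real_derivative (G z + A) / dS) (at z)"
    proof (rule has_field_derivative_transform_within_open[where S="{p<..<q}"])
      show "open {p<..<q}" by simp
      show "z \<in> {p<..<q}" by (rule z)
      fix y assume "y \<in> {p<..<q}"
      then have "y \<in> {p..q}" by auto
      from form[OF this] show "Shat 0 + (Phi L (\<lambda>s. Shat s - \<Lambda>) y + y * A - B) / dS = Shat y" by (rule sym)
    qed
  qed
  define \<phi> where "\<phi> y = h y - Shat y" for y
  have d\<phi>: "\<And>z. z \<in> {p<..<q} \<Longrightarrow> (\<phi> has_real_derivative h1 z - (G z + A) / dS) (at z)"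
  proof -
    fix z assume z: "z \<in> {p<..<q}"
    then have zi: "z \<in> {0<..<L}" using p0 qL by auto
    show "(\<phi> has_real_derivative h1 z - (G z + A) / dS) (at z)"
      unfolding \<phi>_def by (intro DERIV_diff h_d(1)[OF zi] dS'[OF z])
  qed
  have c\<phi>: "continuous_on {p..q} \<phi>"
    unfolding \<phi>_def using p0 qL
    by (intro continuous_intros continuous_on_subset[OF cont_h(1)] continuous_on_subset[OF cont_Shat]) auto
  have \<phi>p: "\<phi> p = 0" "\<phi> q = 0" "\<phi> x > 0" unfolding \<phi>_def using pC qC lt unfolding Cset_def by auto
  have "\<exists>l z. p < z \<and> z < x \<and> (\<phi> has_real_derivative l) (at z) \<and> \<phi> x - \<phi> p = (x - p) * l"
  proof (rule MVT[OF px])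
    show "continuous_on {p..x} \<phi>" by (rule continuous_on_subset[OF c\<phi>]) (use xq in auto)
    fix z assume "p < z" "z < x"
    then have "z \<in> {p<..<q}" using xq by auto
    then show "\<phi> differentiable (at z)" unfolding real_differentiable_def using d\<phi> by blast
  qed
  then obtain l1 z1 where z1: "p < z1" "z1 < x" "(\<phi> has_real_derivative l1) (at z1)" "\<phi> x - \<phi> p = (x - p) * l1"
    by blast
  have "\<exists>l z. x < z \<and> z < q \<and> (\<phi> has_real_derivative l) (at z) \<and> \<phi> q - \<phi> x = (q - x) * l"
  proof (rule MVT[OF xq])
    show "continuous_on {x..q} \<phi>" by (rule continuous_on_subset[OF c\<phi>]) (use px in auto)
    fix z assume "x < z" "z < q"
    then have "z \<in> {p<..<q}" using px by auto
    then show "\<phi> differentiable (at z)" unfolding real_differentiable_def using d\<phi> by blast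
  qed
  then obtain l2 z2 where z2: "x < z2" "z2 < q" "(\<phi> has_real_derivative l2) (at z2)" "\<phi> q - \<phi> x = (q - x) * l2"
    by blast
  have l1e: "l1 = h1 z1 - (G z1 + A) / dS" using DERIV_unique[OF z1(3) d\<phi>] z1 xq by auto
  have l2e: "l2 = h1 z2 - (G z2 + A) / dS" using DERIV_unique[OF z2(3) d\<phi>] z2 px by auto
  have "l1 > 0" using z1(4) \<phi>p px by (simp add: zero_less_mult_iff)
  moreover have "l2 < 0"
  proof -
    have "(q - x) * l2 < 0" using z2(4) \<phi>p by simp
    then show ?thesis using xq by (simp add: mult_less_0_iff)
  qed
  moreover have "h1 z1 \<le> h1 z2" using h1_mono_all[of z1 z2] z1 z2 p0 qL px xq by auto
  moreover have "G z2 < G z1" using G_strict[of z1 z2] z1 z2 p0 qL px xq by auto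
  then have "(G z2 + A) / dS < (G z1 + A) / dS" using dS_pos by (simp add: divide_strict_right_mono)
  ultimately show False using l1e l2e by linarith
qed

end

context setting2
begin

lemma tau_order: "\<tau>1 < \<tau>2" using tau1_lt_rho1 tau2_gt_rho2 rho by simp

definition "w x = \<Lambda> - h x + dS * h2 x"
definition "Acum z = integral\<^sup>L \<mu> (\<lambda>s. \<eta> s * indicator {0..z} s)"
definition "N1 z = dS * h1 z - G z"

lemma mid_sub: "z \<in> {\<tau>1<..<\<tau>2} \<Longrightarrow> z \<in> {0<..<L}" using tau1_pos tau2_lt by auto

lemma N_mid: "y \<in> {\<tau>1..\<tau>2} \<Longrightarrow> N y = dS * h y - dS * Shat 0 - Phi L (\<lambda>s. Shat s - \<Lambda>) y"
  using PP(1)[of y] contact_all[of y] tau_range by auto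

lemma N_deriv: assumes z: "z \<in> {\<tau>1<..<\<tau>2}" shows "(N has_real_derivative N1 z) (at z)"
proof -
  have zi: "z \<in> {0<..<L}" and zL: "z \<in> {0..L}" using mid_sub[OF z] by auto
  have "((\<lambda>y. dS * h y - dS * Shat 0 - Phi L (\<lambda>s. Shat s - \<Lambda>) y) has_real_derivative
        dS * h1 z - 0 - G z) (at z within {0..L})"
    unfolding G_def by (intro DERIV_diff DERIV_cmult DERIV_const Phi_deriv[OF cfS zL] h_within[OF zL]) auto
  then have "((\<lambda>y. dS * h y - dS * Shat 0 - Phi L (\<lambda>s. Shat s - \<Lambda>) y) has_real_derivative N1 z) (at z)"
    using at_within_interior[OF interior_Icc'[OF zi]] unfolding N1_def by simp
  then show ?thesis
  proof (rule has_field_derivative_transform_within_open[where S="{\<tau>1<..<\<tau>2}"])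
    show "open {\<tau>1<..<\<tau>2}" by simp
    show "z \<in> {\<tau>1<..<\<tau>2}" by (rule z)
    fix y assume "y \<in> {\<tau>1<..<\<tau>2}"
    then have "y \<in> {\<tau>1..\<tau>2}" by auto
    from N_mid[OF this] show "dS * h y - dS * Shat 0 - Phi L (\<lambda>s. Shat s - \<Lambda>) y = N y" by (rule sym)
  qed
qed

lemma N1_deriv: assumes z: "z \<in> {\<tau>1<..<\<tau>2}" shows "(N1 has_real_derivative w z) (at z)"
proof -
  have zi: "z \<in> {0<..<L}" using mid_sub[OF z] by auto
  have "(N1 has_real_derivative dS * h2 z - (Shat z - \<Lambda>)) (at z)"
    unfolding N1_def[abs_def] by (intro DERIV_diff DERIV_cmult h_d(2)[OF zi] G_at[OF zi])
  moreover have "Shat z = h z" using contact_all[of z] z by auto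
  ultimately show ?thesis unfolding w_def by (simp add: algebra_simps)
qed

lemma int_eta_ind: "z \<in> {0..L} \<Longrightarrow> integrable \<mu> (\<lambda>s. \<eta> s * indicator {0..z} s)"
  by (rule int_ind_cont) (auto intro!: sets_mu cont_coef)

lemma int_N: "integrable \<mu> (\<lambda>s. max (y - s) 0 * \<eta> s)"
  by (rule int_cont) (intro continuous_intros cont_coef)

lemma eta_nn: "s \<in> space \<mu> \<Longrightarrow> \<eta> s \<ge> 0" using coef_pos space_mu by (auto simp: less_imp_le)

lemma N_diff_lower:
  assumes zy: "z \<in> {0..L}" "y \<in> {0..L}" "z \<le> y"
  shows "(y - z) * Acum z \<le> N y - N z"
proof -
  have "(y - z) * Acum z = integral\<^sup>L \<mu> (\<lambda>s. (y - z) * (\<eta> s * indicator {0..z} s))"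
    unfolding Acum_def by simp
  also have "\<dots> \<le> integral\<^sup>L \<mu> (\<lambda>s. max (y - s) 0 * \<eta> s - max (z - s) 0 * \<eta> s)"
  proof (rule Bochner_Integration.integral_mono)
    show "integrable \<mu> (\<lambda>s. (y - z) * (\<eta> s * indicator {0..z} s))"
      using int_eta_ind[OF zy(1)] by simp
    show "integrable \<mu> (\<lambda>s. max (y - s) 0 * \<eta> s - max (z - s) 0 * \<eta> s)"
      using int_N by simp
    fix s assume s: "s \<in> space \<mu>"
    have e: "\<eta> s \<ge> 0" by (rule eta_nn[OF s])
    have s0: "0 \<le> s" using s space_mu by auto
    show "(y - z) * (\<eta> s * indicator {0..z} s) \<le> max (y - s) 0 * \<eta> s - max (z - s) 0 * \<eta> s"
    proof (cases "s \<le> z")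
      case True
      then have "max (y - s) 0 = y - s" "max (z - s) 0 = z - s" using zy by auto
      then show ?thesis using True s0 by (simp add: algebra_simps)
    next
      case False
      then show ?thesis using e by (simp add: max_def)
    qed
  qed
  also have "\<dots> = N y - N z" unfolding N_def using int_N by simp
  finally show ?thesis .
qed

lemma N_diff_upper:
  assumes zy: "z \<in> {0..L}" "y \<in> {0..L}" "y \<le> z"
  shows "N z - N y \<le> (z - y) * Acum z"
proof -
  have "N z - N y = integral\<^sup>L \<mu> (\<lambda>s. max (z - s) 0 * \<eta> s - max (y - s) 0 * \<eta> s)"
    unfolding N_def using int_N by simp
  also have "\<dots> \<le> integral\<^sup>L \<mu> (\<lambda>s. (z - y) * (\<eta> s * indicator {0..z} s))"
  proof (rule Bochner_Integration.integral_mono)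
    show "integrable \<mu> (\<lambda>s. (z - y) * (\<eta> s * indicator {0..z} s))"
      using int_eta_ind[OF zy(1)] by simp
    show "integrable \<mu> (\<lambda>s. max (z - s) 0 * \<eta> s - max (y - s) 0 * \<eta> s)"
      using int_N by simp
    fix s assume s: "s \<in> space \<mu>"
    have e: "\<eta> s \<ge> 0" by (rule eta_nn[OF s])
    have s0: "0 \<le> s" using s space_mu by auto
    consider "s \<le> y" | "y < s \<and> s \<le> z" | "z < s" by linarith
    then show "max (z - s) 0 * \<eta> s - max (y - s) 0 * \<eta> s \<le> (z - y) * (\<eta> s * indicator {0..z} s)"
    proof cases
      case 1
      then have "max (y - s) 0 = y - s" "max (z - s) 0 = z - s" using zy by auto
      then show ?thesis using 1 zy s0 by (simp add: algebra_simps)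
    next
      case 2
      then have "(z - s) * \<eta> s \<le> (z - y) * \<eta> s" using e by (intro mult_right_mono) auto
      moreover have "max (z - s) 0 = z - s" "max (y - s) 0 = 0" using 2 by auto
      ultimately show ?thesis using 2 s0 by simp
    next
      case 3 then show ?thesis using zy by (simp add: max_def)
    qed
  qed
  also have "\<dots> = (z - y) * Acum z" unfolding Acum_def by simp
  finally show ?thesis .
qed

lemma N1_eq_Acum: assumes z: "z \<in> {\<tau>1<..<\<tau>2}" shows "N1 z = Acum z"
proof -
  have d: "(N has_real_derivative N1 z) (at z)" by (rule N_deriv[OF z])
  have zi: "z \<in> {0<..<L}" using mid_sub[OF z] .
  have "Acum z \<le> N1 z"
  proof (rule dq_lower[OF has_field_derivative_at_within[OF d, of "{z<..}"]])
    show "at z within {z<..} \<noteq> bot" using trivial_limit_at_right_real[of z] by simp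
    have "\<forall>\<^sub>F y in at_right z. y \<in> {z<..<L}" using eventually_at_right_real zi by auto
    then show "\<forall>\<^sub>F y in at z within {z<..}. Acum z \<le> (N y - N z) / (y - z)"
    proof eventually_elim
      case (elim y)
      then have "(y - z) * Acum z \<le> N y - N z" using N_diff_lower[of z y] zi by auto
      then show ?case using elim by (simp add: pos_le_divide_eq mult.commute)
    qed
  qed
  moreover have "N1 z \<le> Acum z"
  proof (rule dq_upper[OF has_field_derivative_at_within[OF d, of "{..<z}"]])
    show "at z within {..<z} \<noteq> bot" using trivial_limit_at_left_real[of z] by simp
    have "\<forall>\<^sub>F y in at_left z. y \<in> {0<..<z}" using eventually_at_left_real zi by auto
    then show "\<forall>\<^sub>F y in at z within {..<z}. (N y - N z) / (y - z) \<le> Acum z"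
    proof eventually_elim
      case (elim y)
      then have le: "N z - N y \<le> (z - y) * Acum z" using N_diff_upper[of z y] zi by auto
      have "(N y - N z) / (y - z) = (N z - N y) / (z - y)"
        using minus_divide_divide[of "N z - N y" "z - y"] by simp
      also have "\<dots> \<le> Acum z" using le elim by (simp add: divide_le_eq mult.commute)
      finally show ?case .
    qed
  qed
  ultimately show ?thesis by simp
qed

lemma Acum_diff: assumes "x \<in> {0..L}" "y \<in> {0..L}" "x \<le> y"
  shows "Acum y - Acum x = integral\<^sup>L \<mu> (\<lambda>s. \<eta> s * indicator {x<..y} s)"
proof -
  have "Acum y - Acum x = integral\<^sup>L \<mu> (\<lambda>s. \<eta> s * indicator {0..y} s - \<eta> s * indicator {0..x} s)"
    unfolding Acum_def using int_eta_ind assms by simp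
  also have "\<dots> = integral\<^sup>L \<mu> (\<lambda>s. \<eta> s * indicator {x<..y} s)"
  proof (rule Bochner_Integration.integral_cong[OF refl])
    fix s assume "s \<in> space \<mu>"
    then have "0 \<le> s" using space_mu by auto
    then show "\<eta> s * indicator {0..y} s - \<eta> s * indicator {0..x} s = \<eta> s * indicator {x<..y} s"
      using assms by (auto simp: indicator_def)
  qed
  finally show ?thesis .
qed

lemma mid_interval:
  assumes xy: "\<tau>1 < x" "x \<le> y" "y < \<tau>2"
  shows "integral\<^sup>L \<mu> (\<lambda>s. \<eta> s * indicator {x<..y} s) = integral {x..y} w"
proof -
  have "((w) has_integral (N1 y - N1 x)) {x..y}"
  proof (rule fundamental_theorem_of_calculus[OF xy(2)])
    fix t assume t: "t \<in> {x..y}"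
    then have "t \<in> {\<tau>1<..<\<tau>2}" using xy by auto
    from has_field_derivative_at_within[OF N1_deriv[OF this]]
    show "(N1 has_vector_derivative w t) (at t within {x..y})"
      by (simp add: has_real_derivative_iff_has_vector_derivative)
  qed
  then have "integral {x..y} w = N1 y - N1 x" by (rule integral_unique)
  also have "\<dots> = Acum y - Acum x" using N1_eq_Acum xy by auto
  also have "\<dots> = integral\<^sup>L \<mu> (\<lambda>s. \<eta> s * indicator {x<..y} s)"
    by (rule Acum_diff) (use xy tau_range in auto)
  finally show ?thesis by simp
qed

lemma w_nonneg: assumes z: "z \<in> {\<tau>1<..<\<tau>2}" shows "w z \<ge> 0"
proof (rule dq_lower[OF has_field_derivative_at_within[OF N1_deriv[OF z], of "{z<..}"]])
  show "at z within {z<..} \<noteq> bot" using trivial_limit_at_right_real[of z] by simp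
  have "\<forall>\<^sub>F y in at_right z. y \<in> {z<..<\<tau>2}" using eventually_at_right_real z by auto
  then show "\<forall>\<^sub>F y in at z within {z<..}. 0 \<le> (N1 y - N1 z) / (y - z)"
  proof eventually_elim
    case (elim y)
    then have "N1 y - N1 z = Acum y - Acum z" using N1_eq_Acum z by auto
    also have "\<dots> = integral\<^sup>L \<mu> (\<lambda>s. \<eta> s * indicator {z<..y} s)"
      by (rule Acum_diff) (use elim z tau_range in auto)
    also have "\<dots> \<ge> 0" using eta_nn by (intro integral_nonneg_AE AE_I2) auto
    finally show ?case using elim by simp
  qed
qed

end

context setting2
begin

lemma id_meas: "(\<lambda>x::real. x) \<in> \<mu> \<rightarrow>\<^sub>M borel"
  using meas_cont[OF continuous_on_id] by (simp add: id_def)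

lemma cont_w: "continuous_on {0..L} w"
  unfolding w_def[abs_def] by (intro continuous_intros cont_h)

lemma meas_ind_cont:
  fixes f :: "real \<Rightarrow> real"
  assumes "a \<le> b" "{a..b} \<subseteq> {0..L}" "continuous_on {0..L} f"
  shows "(\<lambda>s. f s * indicator {a<..b} s) \<in> borel_measurable borel"
proof -
  have "(\<lambda>s. indicator {a<..b} s *\<^sub>R f s) \<in> borel_measurable borel"
    by (rule borel_measurable_continuous_on_indicator)
      (use assms in \<open>auto intro: continuous_on_subset\<close>)
  then show ?thesis by (simp add: mult.commute)
qed

lemma box_nu_eq:
  assumes ab: "\<tau>1 < a" "a < b" "b < \<tau>2"
  shows "density (distr \<mu> borel (\<lambda>x. x)) (\<lambda>s. ennreal (\<eta> s * indicator {a<..b} s))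
       = density lborel (\<lambda>s. ennreal (w s * indicator {a<..b} s))"
    (is "?n1 = ?n2")
proof -
  have sub: "{a..b} \<subseteq> {0..L}" using ab tau_range by auto
  have m\<eta>: "(\<lambda>s. \<eta> s * indicator {a<..b} s) \<in> borel_measurable borel"
    by (rule meas_ind_cont[OF _ sub cont_coef(3)]) (use ab in auto)
  have mw: "(\<lambda>s. w s * indicator {a<..b} s) \<in> borel_measurable borel"
    by (rule meas_ind_cont[OF _ sub cont_w]) (use ab in auto)
  have key: "emeasure ?n1 {x<..} = ennreal (integral\<^sup>L \<mu> (\<lambda>s. \<eta> s * indicator {max a x<..b} s))
     \<and> emeasure ?n2 {x<..} = emeasure ?n1 {x<..}" for x
  proof -
    define c where "c = max a x"
    have Ie: "\<And>s. indicator {a<..b} s * indicator {x<..} s = (indicator {c<..b} s :: real)"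
      unfolding c_def by (auto simp: indicator_def)
    have subc: "{c<..b} \<subseteq> {0..L}" using sub unfolding c_def by auto
    have sc: "{c<..b} \<in> sets \<mu>" using subc by (intro sets_mu) auto
    have "emeasure ?n1 {x<..} = (\<integral>\<^sup>+ s. ennreal (\<eta> s * indicator {a<..b} s) * indicator {x<..} s \<partial>distr \<mu> borel (\<lambda>x. x))"
      by (subst emeasure_density) (use m\<eta> in auto)
    also have "\<dots> = (\<integral>\<^sup>+ s. ennreal (\<eta> s * indicator {c<..b} s) \<partial>distr \<mu> borel (\<lambda>x. x))"
      by (rule nn_integral_cong) (auto simp: indicator_def c_def)
    also have "\<dots> = (\<integral>\<^sup>+ s. ennreal (\<eta> s * indicator {c<..b} s) \<partial>\<mu>)"
    proof (subst nn_integral_distr[OF id_meas])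
      have "(\<lambda>s. \<eta> s * indicator {c<..b} s) \<in> borel_measurable borel"
      proof (cases "c \<le> b")
        case True
        have "{c..b} \<subseteq> {0..L}" using sub ab unfolding c_def by auto
        then show ?thesis by (rule meas_ind_cont[OF True _ cont_coef(3)])
      next
        case False then have "{c<..b} = {}" by auto
        then show ?thesis by simp
      qed
      then show "(\<lambda>s. ennreal (\<eta> s * indicator {c<..b} s)) \<in> borel_measurable (distr \<mu> borel (\<lambda>x. x))"
        by simp
    qed simp
    also have "\<dots> = ennreal (integral\<^sup>L \<mu> (\<lambda>s. \<eta> s * indicator {c<..b} s))"
      by (rule nn_integral_eq_integral) (use int_ind_cont[OF sc cont_coef(3)] eta_nn in \<open>auto intro!: AE_I2\<close>)
    finally have e1: "emeasure ?n1 {x<..} = ennreal (integral\<^sup>L \<mu> (\<lambda>s. \<eta> s * indicator {c<..b} s))" .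
    have "emeasure ?n2 {x<..} = (\<integral>\<^sup>+ s. ennreal (w s * indicator {a<..b} s) * indicator {x<..} s \<partial>lborel)"
      by (subst emeasure_density) (use mw in auto)
    also have "\<dots> = (\<integral>\<^sup>+ s. ennreal (w s * indicator {c<..b} s) \<partial>lborel)"
      by (rule nn_integral_cong) (auto simp: indicator_def c_def)
    finally have e2: "emeasure ?n2 {x<..} = (\<integral>\<^sup>+ s. ennreal (w s * indicator {c<..b} s) \<partial>lborel)" .
    show ?thesis
    proof (cases "c < b")
      case False
      then have z: "\<And>s. indicator {c<..b} s = (0::real)" by (auto simp: indicator_def)
      show ?thesis using e1 e2 by (simp add: z c_def[symmetric])
    next
      case True
      have cab: "\<tau>1 < c" "c \<le> b" "b < \<tau>2" using True ab unfolding c_def by auto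
      have "(\<integral>\<^sup>+ s. ennreal (w s * indicator {c<..b} s) \<partial>lborel) = (\<integral>\<^sup>+ s. ennreal (indicator {c..b} s * w s) \<partial>lborel)"
      proof (rule nn_integral_cong_AE)
        show "AE s in lborel. ennreal (w s * indicator {c<..b} s) = ennreal (indicator {c..b} s * w s)"
          using AE_lborel_singleton[of c] by eventually_elim (auto simp: indicator_def)
      qed
      also have "\<dots> = ennreal (integral {c..b} w)"
      proof (rule nn_integral_has_integral_lebesgue)
        show "\<And>s. s \<in> {c..b} \<Longrightarrow> 0 \<le> w s" using w_nonneg cab by auto
        have "continuous_on {c..b} w" by (rule continuous_on_subset[OF cont_w]) (use cab tau_range in auto)
        then show "(w has_integral integral {c..b} w) {c..b}"
          using integrable_continuous_interval has_integral_integral by blast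
      qed
      finally show ?thesis using e1 e2 mid_interval[OF cab] by (simp add: c_def[symmetric])
    qed
  qed
  show ?thesis
  proof (rule measure_eqI_lessThan)
    show "sets ?n1 = sets borel" by simp
    show "sets ?n2 = sets borel" by simp
    fix x
    show "emeasure ?n1 {x<..} < \<infinity>" using key[of x] by simp
    show "emeasure ?n1 {x<..} = emeasure ?n2 {x<..}" using key[of x] by simp
  qed
qed

lemma box_density:
  assumes ab: "\<tau>1 < a" "a < b" "b < \<tau>2" and A: "A \<in> sets borel" "A \<subseteq> {a<..b}"
  shows "measure \<mu> A = integral\<^sup>L lborel (\<lambda>s. indicator A s * (w s / \<eta> s))"
proof -
  let ?M0 = "distr \<mu> borel (\<lambda>x. x)"
  let ?E = "{a<..b}"
  have sub: "{a..b} \<subseteq> {0..L}" using ab tau_range by auto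
  have \<eta>pos: "\<And>s. s \<in> {a..b} \<Longrightarrow> \<eta> s > 0" using coef_pos sub by auto
  have wnn: "\<And>s. s \<in> {a..b} \<Longrightarrow> w s \<ge> 0" using w_nonneg ab by auto
  have m\<eta>: "(\<lambda>s. \<eta> s * indicator ?E s) \<in> borel_measurable borel"
    by (rule meas_ind_cont[OF _ sub cont_coef(3)]) (use ab in auto)
  have mw: "(\<lambda>s. w s * indicator ?E s) \<in> borel_measurable borel"
    by (rule meas_ind_cont[OF _ sub cont_w]) (use ab in auto)
  have subE: "?E \<subseteq> {0..L}" using sub by auto
  have nz: "\<forall>s\<in>?E. \<eta> s \<noteq> 0"
  proof
    fix s assume "s \<in> ?E"
    then have "s \<in> {a..b}" by auto
    from \<eta>pos[OF this] show "\<eta> s \<noteq> 0" by simp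
  qed
  have ci: "continuous_on ?E (\<lambda>s. 1 / \<eta> s)"
    by (intro continuous_intros continuous_on_subset[OF cont_coef(3) subE] nz)
  have m1: "(\<lambda>s. indicator ?E s *\<^sub>R (1 / \<eta> s)) \<in> borel_measurable borel"
    by (rule borel_measurable_continuous_on_indicator[OF _ ci]) simp
  have mg0: "(\<lambda>s. indicator A s * (indicator ?E s *\<^sub>R (1 / \<eta> s))) \<in> borel_measurable borel"
    using m1 A(1) by measurable
  define g where "g s = ennreal (indicator A s * (indicator ?E s *\<^sub>R (1 / \<eta> s)))" for s
  have mg: "g \<in> borel_measurable borel" unfolding g_def using mg0 by measurable
  have eq: "density ?M0 (\<lambda>s. ennreal (\<eta> s * indicator ?E s)) = density lborel (\<lambda>s. ennreal (w s * indicator ?E s))"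
    by (rule box_nu_eq[OF ab])
  have mM0: "borel_measurable ?M0 = borel_measurable borel" by (rule measurable_cong_sets) auto
  have "integral\<^sup>N (density ?M0 (\<lambda>s. ennreal (\<eta> s * indicator ?E s))) g
        = (\<integral>\<^sup>+ s. ennreal (\<eta> s * indicator ?E s) * g s \<partial>?M0)"
    by (rule nn_integral_density) (use m\<eta> mg mM0 in auto)
  also have "\<dots> = (\<integral>\<^sup>+ s. indicator A s \<partial>?M0)"
  proof (rule nn_integral_cong)
    fix s
    show "ennreal (\<eta> s * indicator ?E s) * g s = indicator A s"
    proof (cases "s \<in> A")
      case True
      then have sE: "s \<in> ?E" using A by auto
      then have p: "\<eta> s > 0" using \<eta>pos by auto
      have "ennreal (\<eta> s * indicator ?E s) * g s = ennreal (\<eta> s) * ennreal (1 / \<eta> s)"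
        unfolding g_def using True sE by simp
      also have "\<dots> = ennreal (\<eta> s * (1 / \<eta> s))" using p by (subst ennreal_mult) auto
      also have "\<dots> = 1" using p by simp
      finally show ?thesis using True by simp
    next
      case False then show ?thesis unfolding g_def by simp
    qed
  qed
  also have "\<dots> = emeasure ?M0 A" using A(1) by simp
  also have "\<dots> = emeasure \<mu> A"
    using A sub space_mu by (subst emeasure_distr[OF id_meas]) (auto intro!: arg_cong[where f="emeasure \<mu>"])
  finally have L1: "integral\<^sup>N (density ?M0 (\<lambda>s. ennreal (\<eta> s * indicator ?E s))) g = emeasure \<mu> A" .
  have "integral\<^sup>N (density lborel (\<lambda>s. ennreal (w s * indicator ?E s))) g
        = (\<integral>\<^sup>+ s. ennreal (w s * indicator ?E s) * g s \<partial>lborel)"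
    by (rule nn_integral_density) (use mw mg in auto)
  also have "\<dots> = (\<integral>\<^sup>+ s. ennreal (indicator A s * (w s / \<eta> s)) \<partial>lborel)"
  proof (rule nn_integral_cong)
    fix s
    show "ennreal (w s * indicator ?E s) * g s = ennreal (indicator A s * (w s / \<eta> s))"
    proof (cases "s \<in> A")
      case True
      then have sE: "s \<in> ?E" using A by auto
      then have p: "\<eta> s > 0" and wp: "w s \<ge> 0" using \<eta>pos wnn by auto
      have "ennreal (w s * indicator ?E s) * g s = ennreal (w s) * ennreal (1 / \<eta> s)"
        unfolding g_def using True sE by simp
      also have "\<dots> = ennreal (w s * (1 / \<eta> s))" using p wp by (subst ennreal_mult) auto
      finally show ?thesis using True by simp
    next
      case False then show ?thesis unfolding g_def by simp
    qed
  qed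
  finally have R1: "integral\<^sup>N (density lborel (\<lambda>s. ennreal (w s * indicator ?E s))) g
     = (\<integral>\<^sup>+ s. ennreal (indicator A s * (w s / \<eta> s)) \<partial>lborel)" .
  have nz2: "\<forall>s\<in>{a..b}. \<eta> s \<noteq> 0" using \<eta>pos by (metis less_irrefl)
  have ci2: "continuous_on {a..b} (\<lambda>s. w s / \<eta> s)"
    by (intro continuous_intros continuous_on_subset[OF cont_w sub] continuous_on_subset[OF cont_coef(3) sub] nz2)
  have int: "integrable lborel (\<lambda>s. indicator A s * (w s / \<eta> s))"
  proof -
    have "integrable lborel (\<lambda>s. (indicator {a..b} s *\<^sub>R (w s / \<eta> s)) * indicator A s)"
      by (rule integrable_real_mult_indicator) (use A(1) borel_integrable_compact[OF compact_Icc ci2] in auto)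
    moreover have "(\<lambda>s. (indicator {a..b} s *\<^sub>R (w s / \<eta> s)) * indicator A s) = (\<lambda>s. indicator A s * (w s / \<eta> s))"
      using A by (auto simp: fun_eq_iff indicator_def)
    ultimately show ?thesis by simp
  qed
  have nn: "\<And>s. indicator A s * (w s / \<eta> s) \<ge> 0"
  proof -
    fix s show "indicator A s * (w s / \<eta> s) \<ge> 0"
    proof (cases "s \<in> A")
      case True then have "s \<in> {a..b}" using A by auto
      then show ?thesis using True \<eta>pos wnn by (simp add: less_imp_le)
    qed simp
  qed
  have "emeasure \<mu> A = ennreal (integral\<^sup>L lborel (\<lambda>s. indicator A s * (w s / \<eta> s)))"
    using L1 R1 eq nn_integral_eq_integral[OF int] nn by simp
  moreover have "integral\<^sup>L lborel (\<lambda>s. indicator A s * (w s / \<eta> s)) \<ge> 0"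
    using nn by (intro integral_nonneg_AE AE_I2) auto
  ultimately show ?thesis unfolding measure_def by simp
qed

lemma density_full:
  assumes A: "A \<in> sets borel" "A \<subseteq> {\<tau>1<..<\<tau>2}"
  shows "measure \<mu> A = (LINT x:A|lborel. (\<Lambda> - h x + dS * h2 x) / \<eta> x)"
proof -
  define d where "d = \<tau>2 - \<tau>1"
  have d: "d > 0" unfolding d_def using tau_order by simp
  define a where "a n = \<tau>1 + d / real (n + 3)" for n :: nat
  define b where "b n = \<tau>2 - d / real (n + 3)" for n :: nat
  define An where "An n = A \<inter> {a n<..b n}" for n
  have ab: "\<tau>1 < a n" "a n < b n" "b n < \<tau>2" for n
  proof -
    define e where "e = d / real (n + 3)"
    have e: "e > 0" unfolding e_def using d by simp
    have "e * 3 \<le> e * real (n + 3)" using e by (intro mult_left_mono) auto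
    moreover have "e * real (n + 3) = d" unfolding e_def by simp
    ultimately have e3: "e * 3 \<le> d" by simp
    show "\<tau>1 < a n" "a n < b n" "b n < \<tau>2" unfolding a_def b_def e_def[symmetric] using e e3 d_def by linarith+
  qed
  have sub: "{\<tau>1..\<tau>2} \<subseteq> {0..L}" using tau_range by auto
  define F where "F s = indicator {\<tau>1..\<tau>2} s *\<^sub>R (w s / \<eta> s)" for s
  have nz: "\<forall>s\<in>{\<tau>1..\<tau>2}. \<eta> s \<noteq> 0"
  proof
    fix s assume "s \<in> {\<tau>1..\<tau>2}"
    then have "s \<in> {0..L}" using sub by auto
    then have "\<eta> s > 0" using coef_pos by auto
    then show "\<eta> s \<noteq> 0" by simp
  qed
  have cF: "continuous_on {\<tau>1..\<tau>2} (\<lambda>s. w s / \<eta> s)"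
    by (intro continuous_intros continuous_on_subset[OF cont_w sub] continuous_on_subset[OF cont_coef(3) sub] nz)
  have intF: "integrable lborel F" unfolding F_def by (rule borel_integrable_compact[OF compact_Icc cF])
  have cFa: "continuous_on {\<tau>1..\<tau>2} (\<lambda>s. \<bar>w s / \<eta> s\<bar>)" by (intro continuous_intros cF)
  have intFa: "integrable lborel (\<lambda>s. indicator {\<tau>1..\<tau>2} s *\<^sub>R \<bar>w s / \<eta> s\<bar>)"
    by (rule borel_integrable_compact[OF compact_Icc cFa])
  have mF: "F \<in> borel_measurable borel" using intF by auto
  have Aeq: "\<And>B s. B \<subseteq> A \<Longrightarrow> indicator B s * (w s / \<eta> s) = indicator B s * F s"
    using A unfolding F_def by (auto simp: indicator_def)
  have An_sets: "An n \<in> sets borel" "An n \<subseteq> {a n<..b n}" for n unfolding An_def using A by auto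
  have box: "measure \<mu> (An n) = integral\<^sup>L lborel (\<lambda>s. indicator (An n) s * F s)" for n
    using box_density[OF ab An_sets] Aeq[of "An n"] unfolding An_def by auto
  have mono_ab: "m \<le> n \<Longrightarrow> a n \<le> a m \<and> b m \<le> b n" for m n
  proof -
    assume "m \<le> n"
    then have "d / real (n + 3) \<le> d / real (m + 3)" using d by (intro divide_left_mono) auto
    then show ?thesis unfolding a_def b_def by auto
  qed
  have inc: "incseq An" unfolding incseq_def An_def using mono_ab by fastforce
  have union: "(\<Union>n. An n) = A"
  proof
    show "(\<Union>n. An n) \<subseteq> A" unfolding An_def by auto
    show "A \<subseteq> (\<Union>n. An n)"
    proof
      fix s assume s: "s \<in> A"
      then have "s \<in> {\<tau>1<..<\<tau>2}" using A by auto
      then obtain n where "s \<in> {\<tau>1 + d / real (n + 3)<..<\<tau>2 - d / real (n + 3)}"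
        using exhaust_open[OF tau_order] unfolding d_def by blast
      then have "s \<in> An n" using s unfolding An_def a_def b_def by auto
      then show "s \<in> (\<Union>n. An n)" by blast
    qed
  qed
  have lim1: "(\<lambda>n. measure \<mu> (An n)) \<longlonglongrightarrow> measure \<mu> A"
  proof -
    have "range An \<subseteq> sets \<mu>"
    proof safe
      fix n show "An n \<in> sets \<mu>" using An_sets[of n] ab[of n] sub by (intro sets_mu) auto
    qed
    from finite_measure.finite_Lim_measure_incseq[OF mu_finite this inc] show ?thesis using union by simp
  qed
  have lim2: "(\<lambda>n. integral\<^sup>L lborel (\<lambda>s. indicator (An n) s * F s)) \<longlonglongrightarrow> integral\<^sup>L lborel (\<lambda>s. indicator A s * F s)"
  proof (rule integral_dominated_convergence[where w="\<lambda>s. indicator {\<tau>1..\<tau>2} s *\<^sub>R \<bar>w s / \<eta> s\<bar>"])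
    show "(\<lambda>s. indicator A s * F s) \<in> borel_measurable lborel" using mF A(1) by measurable
    show "(\<lambda>s. indicator (An n) s * F s) \<in> borel_measurable lborel" for n using mF An_sets(1)[of n] by measurable
    show "integrable lborel (\<lambda>s. indicator {\<tau>1..\<tau>2} s *\<^sub>R \<bar>w s / \<eta> s\<bar>)" by (rule intFa)
    show "AE s in lborel. (\<lambda>n. indicator (An n) s * F s) \<longlonglongrightarrow> indicator A s * F s"
    proof (rule AE_I2)
      fix s
      show "(\<lambda>n. indicator (An n) s * F s) \<longlonglongrightarrow> indicator A s * F s"
      proof (cases "s \<in> A")
        case True
        then obtain N where N: "s \<in> An N" using union by blast
        have "\<forall>\<^sub>F n in sequentially. indicator (An n) s * F s = indicator A s * F s"
        proof (rule eventually_sequentiallyI[of N])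
          fix n assume "N \<le> n"
          then have "An N \<subseteq> An n" using inc by (simp add: incseq_def)
          then show "indicator (An n) s * F s = indicator A s * F s" using N True by auto
        qed
        then show ?thesis by (rule tendsto_eventually)
      next
        case False
        then have "\<And>n. s \<notin> An n" unfolding An_def by auto
        then show ?thesis using False by simp
      qed
    qed
    show "AE s in lborel. norm (indicator (An n) s * F s) \<le> indicator {\<tau>1..\<tau>2} s *\<^sub>R \<bar>w s / \<eta> s\<bar>" for n
      by (rule AE_I2) (auto simp: F_def indicator_def)
  qed
  have "measure \<mu> A = integral\<^sup>L lborel (\<lambda>s. indicator A s * F s)"
    using LIMSEQ_unique[OF lim1] lim2 box by simp
  also have "\<dots> = integral\<^sup>L lborel (\<lambda>s. indicator A s * (w s / \<eta> s))" using Aeq[of A] by simp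
  also have "\<dots> = (LINT x:A|lborel. (\<Lambda> - h x + dS * h2 x) / \<eta> x)"
    unfolding set_lebesgue_integral_def w_def by simp
  finally show ?thesis .
qed

end

context setting2
begin

lemma main:
  shows "\<exists>\<tau>1 \<tau>2. 0 < \<tau>1 \<and> \<tau>1 < \<rho>1 \<and> \<rho>2 < \<tau>2 \<and> \<tau>2 < L \<and>
     (\<forall>x\<in>{\<tau>1..\<tau>2}. Shat x = h x) \<and>
     (\<exists>D1 D2. \<forall>x\<in>{0<..<\<tau>1} \<union> {\<tau>2<..<L}.
         (Shat has_real_derivative D1 x) (at x) \<and>
         (D1 has_real_derivative D2 x) (at x) \<and>
         - dS * D2 x = \<Lambda> - Shat x) \<and>
     (Shat has_real_derivative 0) (at 0 within {0..L}) \<and>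
     (Shat has_real_derivative 0) (at L within {0..L}) \<and>
     Shat \<tau>1 = h \<tau>1 \<and> Shat \<tau>2 = h \<tau>2 \<and>
     (\<forall>A\<in>sets borel. A \<subseteq> {\<tau>1<..<\<tau>2} \<longrightarrow>
         measure \<mu> A = (LINT x:A|lborel. (\<Lambda> - h x + dS * h2 x) / \<eta> x)) \<and>
     emeasure \<mu> ({0..<\<tau>1} \<union> {\<tau>2<..L}) = 0"
proof -
  define D1 where "D1 x = (if x < \<tau>1 then G x / dS else (G x - G L) / dS)" for x
  define D2 where "D2 x = (Shat x - \<Lambda>) / dS" for x
  have derivs: "\<forall>x\<in>{0<..<\<tau>1} \<union> {\<tau>2<..<L}.
         (Shat has_real_derivative D1 x) (at x) \<and>
         (D1 has_real_derivative D2 x) (at x) \<and>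
         - dS * D2 x = \<Lambda> - Shat x"
  proof
    fix x assume x: "x \<in> {0<..<\<tau>1} \<union> {\<tau>2<..<L}"
    have xi: "x \<in> {0<..<L}" using x tau_range by auto
    have e: "at x within {0..L} = at x" by (rule at_within_interior[OF interior_Icc'[OF xi]])
    have eq3: "- dS * D2 x = \<Lambda> - Shat x" unfolding D2_def using dS_pos by simp
    show "(Shat has_real_derivative D1 x) (at x) \<and> (D1 has_real_derivative D2 x) (at x) \<and> - dS * D2 x = \<Lambda> - Shat x"
    proof (cases "x < \<tau>1")
      case True
      have x1: "x \<in> {0..<\<tau>1}" using True x tau_range by auto
      have d1: "(Shat has_real_derivative D1 x) (at x)"
        using Shat_left_L[OF x1] e True unfolding D1_def by simp
      have "((\<lambda>y. G y / dS) has_real_derivative D2 x) (at x)"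
        unfolding D2_def by (intro DERIV_cdivide G_at[OF xi])
      then have d2: "(D1 has_real_derivative D2 x) (at x)"
      proof (rule has_field_derivative_transform_within_open[where S="{0<..<\<tau>1}"])
        show "open {0<..<\<tau>1}" by simp
        show "x \<in> {0<..<\<tau>1}" using x True tau_range by auto
        fix y assume "y \<in> {0<..<\<tau>1}"
        then show "G y / dS = D1 y" unfolding D1_def by simp
      qed
      show ?thesis using d1 d2 eq3 by simp
    next
      case False
      then have x2: "x \<in> {\<tau>2<..L}" "x \<in> {\<tau>2<..<L}" using x tau_range by auto
      have d1: "(Shat has_real_derivative D1 x) (at x)"
        using Shat_right_L[OF x2(1)] e False unfolding D1_def by simp
      have "((\<lambda>y. (G y - G L) / dS) has_real_derivative (Shat x - \<Lambda> - 0) / dS) (at x)"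
        by (intro DERIV_cdivide DERIV_diff G_at[OF xi] DERIV_const)
      then have "((\<lambda>y. (G y - G L) / dS) has_real_derivative D2 x) (at x)" unfolding D2_def by simp
      then have d2: "(D1 has_real_derivative D2 x) (at x)"
      proof (rule has_field_derivative_transform_within_open[where S="{\<tau>2<..<L}"])
        show "open {\<tau>2<..<L}" by simp
        show "x \<in> {\<tau>2<..<L}" using x2 by auto
        fix y assume "y \<in> {\<tau>2<..<L}"
        then have "\<not> y < \<tau>1" using tau_range by auto
        then show "(G y - G L) / dS = D1 y" unfolding D1_def by simp
      qed
      show ?thesis using d1 d2 eq3 by simp
    qed
  qed
  have d0: "(Shat has_real_derivative 0) (at 0 within {0..L})"
    using Shat_left_L[of 0] tau1_pos G0 by simp
  have dL: "(Shat has_real_derivative 0) (at L within {0..L})"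
    using Shat_right_L[of L] tau2_lt by simp
  have null: "emeasure \<mu> ({0..<\<tau>1} \<union> {\<tau>2<..L}) = 0"
  proof -
    have "{0..<\<tau>1} \<union> {\<tau>2<..L} \<in> null_sets \<mu>" using null_sets_lr by auto
    then show ?thesis by auto
  qed
  have tin: "Shat \<tau>1 = h \<tau>1" "Shat \<tau>2 = h \<tau>2" using tau_in unfolding Cset_def by auto
  show ?thesis
    apply (rule exI[of _ \<tau>1], rule exI[of _ \<tau>2])
    using tau1_pos tau1_lt_rho1 tau2_gt_rho2 tau2_lt contact_all derivs d0 dL tin density_full null
    by blast
qed

end

theorem lemma3p4:
  fixes L dS \<Lambda> \<rho>1 \<rho>2 :: real
    and \<beta> \<gamma> \<eta> h h1 h2 Shat :: "real \<Rightarrow> real"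
    and dI :: "nat \<Rightarrow> real"
    and S I :: "nat \<Rightarrow> real \<Rightarrow> real"
    and \<mu> :: "real measure"
  assumes L_pos: "L > 0" and dS_pos: "dS > 0" and Lambda_pos: "\<Lambda> > 0"
    and coef_holder: "holder_on {0..L} \<beta>" "holder_on {0..L} \<gamma>" "holder_on {0..L} \<eta>"
    and coef_pos: "\<forall>x\<in>{0..L}. \<beta> x > 0 \<and> \<gamma> x > 0 \<and> \<eta> x > 0"
    and h_def: "h = (\<lambda>x. (\<gamma> x + \<eta> x) / \<beta> x)"
    and Lambda_gt_h: "\<forall>x\<in>{0..L}. \<Lambda> > h x"
    and dI_pos: "\<forall>n. dI n > 0" and dI_lim: "dI \<longlonglongrightarrow> 0"
    and equil: "\<forall>n. endemic_eq L dS \<Lambda> \<beta> \<gamma> \<eta> (dI n) (S n) (I n)"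
    and S_unif: "uniform_limit {0..L} S Shat sequentially"
    and mu_sets: "sets \<mu> = sets (restrict_space borel {0..L})"
    and mu_finite: "finite_measure \<mu>"
    and I_weak: "\<forall>\<zeta>. continuous_on {0..L} \<zeta> \<longrightarrow>
        (\<lambda>n. integral {0..L} (\<lambda>x. I n x * \<zeta> x)) \<longlonglongrightarrow> integral\<^sup>L \<mu> \<zeta>"
    and h_C2: "C2_with {0..L} h h1 h2"
    and Theta: "{x\<in>{0..L}. h x = Inf (h ` {0..L})} = {\<rho>1..\<rho>2}"
    and rho: "0 < \<rho>1" "\<rho>1 < \<rho>2" "\<rho>2 < L"
    and h1_mono: "mono_on ({0..\<rho>1} \<union> {\<rho>2..L}) h1"
  shows "\<exists>\<tau>1 \<tau>2. 0 < \<tau>1 \<and> \<tau>1 < \<rho>1 \<and> \<rho>2 < \<tau>2 \<and> \<tau>2 < L \<and>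
     (\<forall>x\<in>{\<tau>1..\<tau>2}. Shat x = h x) \<and>
     (\<exists>D1 D2. \<forall>x\<in>{0<..<\<tau>1} \<union> {\<tau>2<..<L}.
         (Shat has_real_derivative D1 x) (at x) \<and>
         (D1 has_real_derivative D2 x) (at x) \<and>
         - dS * D2 x = \<Lambda> - Shat x) \<and>
     (Shat has_real_derivative 0) (at 0 within {0..L}) \<and>
     (Shat has_real_derivative 0) (at L within {0..L}) \<and>
     Shat \<tau>1 = h \<tau>1 \<and> Shat \<tau>2 = h \<tau>2 \<and>
     (\<forall>A\<in>sets borel. A \<subseteq> {\<tau>1<..<\<tau>2} \<longrightarrow>
         measure \<mu> A = (LINT x:A|lborel. (\<Lambda> - h x + dS * h2 x) / \<eta> x)) \<and>
     emeasure \<mu> ({0..<\<tau>1} \<union> {\<tau>2<..L}) = 0"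
proof -
  interpret S0: setting L dS \<Lambda> \<rho>1 \<rho>2 \<beta> \<gamma> \<eta> h h1 h2 Shat dI S I \<mu>
    unfolding setting_def using assms by blast
  obtain S1 S2 I1 I2 where E: "\<forall>n. eqsys L dS \<Lambda> \<beta> \<gamma> \<eta> (dI n) (S n) (I n) (S1 n) (S2 n) (I1 n) (I2 n)"
    using S0.eqs by blast
  interpret S3: setting2 L dS \<Lambda> \<rho>1 \<rho>2 \<beta> \<gamma> \<eta> h h1 h2 Shat dI S I \<mu> S1 S2 I1 I2
    by (unfold_locales) (rule E)
  show ?thesis by (rule S3.main)
qed

end
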